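(* Assume $\mathcal R_0>1$ and let $$\lambda>\frac{\big(\beta_E\nu\nu_E-(\nu_E+\delta_E)\delta_F\big)\delta_s}{\gamma_s(\nu_E+\delta_E)\delta_F}.$$ Then $\mathcal M:=\mathcal M(\overline\kappa)$ is positively invariant and $\mathbf 0$ is globally asymptotically stable in $\mathcal M$ (in the Filippov sense) for the closed-loop system $$\dot E=\beta_E F\Big(1-\frac EK\Big)-(\nu_E+\delta_E)E,\quad \dot M=(1-\nu)\nu_E E-\delta_M M,\quad \dot F=\nu\nu_E E\frac{M}{M+\gamma_sM_s}-\delta_F F,\quad \dot M_s=\lambda M-\delta_sM_s.$$
   Context: Parameters: $\beta_E,\nu_E,\delta_E,\delta_M,\delta_F,\delta_s,K>0$, $\nu\in(0,1)$, $\gamma_s\in(0,1]$, $\delta_s\ge\delta_M$. $\mathcal R_0:=\dfrac{\beta_E\nu\nu_E}{\delta_F(\nu_E+\delta_E)}$. $\mathcal D'=[0,+\infty)^4$, $z=(E,M,F,M_s)^T$. $\overline\kappa:=\dfrac{\gamma_s\delta_F(\nu_E+\delta_E)}{\beta_E\nu\nu_E-\delta_F(\nu_E+\delta_E)}$. $\mathcal T_1=\{z\in\mathcal D':\beta_EF(1-E/K)\le(\nu_E+\delta_E)E\}$, $\mathcal T_2(\kappa)=\{z\in\mathcal D':M\le\kappa M_s\}$, $\mathcal T_3=\{z\in\mathcal D':(1-\nu)\nu_EE\le\delta_MM\}$, $\mathcal M(\kappa)=\mathcal T_1\cap\mathcal T_2(\kappa)\cap\mathcal T_3$. Filippov solutions: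 locally Lipschitz $z:I\to\mathcal D'$ with $\dot z(t)\in\bigcap_{\varepsilon>0}\bigcap_{N}\overline{\mathrm{conv}}\,X\big(((z(t)+\varepsilon B)\cap\mathcal D')\setminus N\big)$ for a.e. $t$ ($X$ the closed-loop right-hand side, $B$ unit ball of $\mathbb R^4$, $N$ Lebesgue-null). Globally asymptotically stable in $\mathcal S$: for every $\varepsilon>0$ there is $\delta>0$ such that every Filippov solution with $z(0)\in\mathcal S$, $\|z(0)\|<\delta$ satisfies $\|z(t)\|<\varepsilon$ for all $t>0$, and every Filippov solution with $z(0)\in\mathcal S$ tends to $\mathbf 0$. *)

theory Defs
  imports "HOL-Analysis.Analysis"
begin

text \<open>State z = (E, M, F, M_s) is a vector in real^4 with components
  z$1 = E, z$2 = M, z$3 = F, z$4 = M_s.\<close>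

definition Dprime :: "(real^4) set" where
  "Dprime = {z. \<forall>i. z $ i \<ge> 0}"

definition vec4 :: "real \<Rightarrow> real \<Rightarrow> real \<Rightarrow> real \<Rightarrow> real^4" where
  "vec4 a b c d = (\<chi> i. if i = 1 then a else if i = 2 then b else if i = 3 then c else d)"

text \<open>Closed-loop right-hand side. Where M + gamma_s M_s = 0 the quotient is 0 (Isabelle's
  division convention); this is a Lebesgue-null set, irrelevant for Filippov solutions.\<close>
definition closed_loop ::
  "real \<Rightarrow> real \<Rightarrow> real \<Rightarrow> real \<Rightarrow> real \<Rightarrow> real \<Rightarrow> real \<Rightarrow> real \<Rightarrow> real \<Rightarrow> real \<Rightarrow> real^4 \<Rightarrow> real^4" where
  "closed_loop \<beta>E \<nu>E \<delta>E \<delta>M \<delta>F \<delta>s K \<nu> \<gamma>s lam z =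
     (let E = z $ 1; M = z $ 2; F = z $ 3; Ms = z $ 4 in
      vec4 (\<beta>E * F * (1 - E / K) - (\<nu>E + \<delta>E) * E)
           ((1 - \<nu>) * \<nu>E * E - \<delta>M * M)
           (\<nu> * \<nu>E * E * (M / (M + \<gamma>s * Ms)) - \<delta>F * F)
           (lam * M - \<delta>s * Ms))"

definition filippov_set :: "(real^4 \<Rightarrow> real^4) \<Rightarrow> (real^4) set \<Rightarrow> real^4 \<Rightarrow> (real^4) set" where
  "filippov_set X D z =
     (\<Inter>\<epsilon>\<in>{0<..}. \<Inter>N\<in>null_sets lborel.
        closure (convex hull (X ` ((cball z \<epsilon> \<inter> D) - N))))"

definition locally_lipschitz_on :: "real set \<Rightarrow> (real \<Rightarrow> real^4) \<Rightarrow> bool" where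
  "locally_lipschitz_on I z \<longleftrightarrow>
     (\<forall>t\<in>I. \<exists>r>0. \<exists>L. \<forall>s1\<in>I \<inter> ball t r. \<forall>s2\<in>I \<inter> ball t r.
        dist (z s1) (z s2) \<le> L * dist s1 s2)"

definition filippov_solution ::
  "(real^4 \<Rightarrow> real^4) \<Rightarrow> (real^4) set \<Rightarrow> real set \<Rightarrow> (real \<Rightarrow> real^4) \<Rightarrow> bool" where
  "filippov_solution X D I z \<longleftrightarrow>
     is_interval I \<and> locally_lipschitz_on I z \<and> (\<forall>t\<in>I. z t \<in> D) \<and>
     (AE t in lborel. t \<in> I \<longrightarrow>
        (\<exists>v. (z has_vector_derivative v) (at t within I) \<and> v \<in> filippov_set X D (z t)))"

definition positively_invariant ::
  "(real^4 \<Rightarrow> real^4) \<Rightarrow> (real^4) set \<Rightarrow> (real^4) set \<Rightarrow> bool" where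
  "positively_invariant X D S \<longleftrightarrow>
     (\<forall>I z. filippov_solution X D I z \<and> 0 \<in> I \<and> z 0 \<in> S \<longrightarrow>
        (\<forall>t\<in>I. t \<ge> 0 \<longrightarrow> z t \<in> S))"

definition GAS_in ::
  "(real^4 \<Rightarrow> real^4) \<Rightarrow> (real^4) set \<Rightarrow> (real^4) set \<Rightarrow> bool" where
  "GAS_in X D S \<longleftrightarrow>
     (\<forall>\<epsilon>>0. \<exists>\<delta>>0. \<forall>I z. filippov_solution X D I z \<and> 0 \<in> I \<and> z 0 \<in> S \<and> norm (z 0) < \<delta> \<longrightarrow>
        (\<forall>t\<in>I. t > 0 \<longrightarrow> norm (z t) < \<epsilon>)) \<and>
     (\<forall>z. filippov_solution X D {0..} z \<and> z 0 \<in> S \<longrightarrow> (z \<longlongrightarrow> 0) at_top)"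

definition T1 :: "real \<Rightarrow> real \<Rightarrow> real \<Rightarrow> real \<Rightarrow> (real^4) set" where
  "T1 \<beta>E \<nu>E \<delta>E K = {z \<in> Dprime. \<beta>E * z$3 * (1 - z$1 / K) \<le> (\<nu>E + \<delta>E) * z$1}"

definition T2 :: "real \<Rightarrow> (real^4) set" where
  "T2 \<kappa> = {z \<in> Dprime. z$2 \<le> \<kappa> * z$4}"

definition T3 :: "real \<Rightarrow> real \<Rightarrow> real \<Rightarrow> (real^4) set" where
  "T3 \<nu> \<nu>E \<delta>M = {z \<in> Dprime. (1 - \<nu>) * \<nu>E * z$1 \<le> \<delta>M * z$2}"

definition Mset :: "real \<Rightarrow> real \<Rightarrow> real \<Rightarrow> real \<Rightarrow> real \<Rightarrow> real \<Rightarrow> real \<Rightarrow> (real^4) set" where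
  "Mset \<beta>E \<nu>E \<delta>E \<delta>M K \<nu> \<kappa> = T1 \<beta>E \<nu>E \<delta>E K \<inter> T2 \<kappa> \<inter> T3 \<nu> \<nu>E \<delta>M"

end

theory Submission
  imports Defs
begin


lemma vec4_nth [simp]:
  "vec4 a b c d $ 1 = a" "vec4 a b c d $ 2 = b" "vec4 a b c d $ 3 = c" "vec4 a b c d $ 4 = d"
  by (simp_all add: vec4_def)

lemma convex_comp_le: "convex {u::real^4. u $ i \<le> c}"
  unfolding convex_def by (auto intro: convex_bound_le)

lemma convex_comp_ge: "convex {u::real^4. c \<le> u $ i}"
proof -
  have "{u::real^4. c \<le> u $ i} = {u. (-u) $ i \<le> -c}" by auto
  also have "\<dots> = uminus ` {u::real^4. u $ i \<le> -c}"
    by (auto intro!: image_eqI[where x="- _"])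
  finally show ?thesis using convex_comp_le convex_negations by metis
qed

lemma closed_comp_le: "closed {u::real^4. u $ i \<le> c}"
  by (intro closed_Collect_le continuous_intros)
lemma closed_comp_ge: "closed {u::real^4. c \<le> u $ i}"
  by (intro closed_Collect_le continuous_intros)

lemma filippov_sub:
  assumes "v \<in> filippov_set X D z" "e > 0"
  shows "v \<in> closure (convex hull (X ` (cball z e \<inter> D)))"
  using assms unfolding filippov_set_def by (fastforce)

lemma filippov_le:
  assumes v: "v \<in> filippov_set X D z" and h: "continuous (at z) h"
    and b: "\<And>w. w \<in> D \<Longrightarrow> X w $ i \<le> h w"
  shows "v $ i \<le> h z"
proof (rule field_le_epsilon)
  fix \<eta> :: real assume "\<eta> > 0"
  then obtain d where d: "d > 0" "\<And>w. dist w z < d \<Longrightarrow> dist (h w) (h z) < \<eta>"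
    using h unfolding continuous_at_eps_delta by blast
  have "X ` (cball z (d/2) \<inter> D) \<subseteq> {u. u $ i \<le> h z + \<eta>}"
  proof
    fix u assume "u \<in> X ` (cball z (d/2) \<inter> D)"
    then obtain w where w: "w \<in> cball z (d/2)" "w \<in> D" "u = X w" by auto
    have "dist w z < d" using w(1) d(1) by (simp add: dist_commute)
    then have "\<bar>h w - h z\<bar> < \<eta>" using d(2) by (auto simp: dist_real_def)
    then have "h w < h z + \<eta>" by linarith
    then show "u \<in> {u. u $ i \<le> h z + \<eta>}" using b[OF w(2)] w(3) by auto
  qed
  then have "closure (convex hull (X ` (cball z (d/2) \<inter> D))) \<subseteq> {u. u $ i \<le> h z + \<eta>}"
    by (intro closure_minimal hull_minimal convex_comp_le closed_comp_le)
  with filippov_sub[OF v, of "d/2"] d(1) show "v $ i \<le> h z + \<eta>" by auto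
qed

lemma filippov_ge:
  assumes v: "v \<in> filippov_set X D z" and h: "continuous (at z) h"
    and b: "\<And>w. w \<in> D \<Longrightarrow> h w \<le> X w $ i"
  shows "h z \<le> v $ i"
proof -
  have "- v $ i \<le> - h z"
  proof (rule field_le_epsilon)
  fix \<eta> :: real assume "\<eta> > 0"
  then obtain d where d: "d > 0" "\<And>w. dist w z < d \<Longrightarrow> dist (h w) (h z) < \<eta>"
    using h unfolding continuous_at_eps_delta by blast
  have "X ` (cball z (d/2) \<inter> D) \<subseteq> {u. h z - \<eta> \<le> u $ i}"
  proof
    fix u assume "u \<in> X ` (cball z (d/2) \<inter> D)"
    then obtain w where w: "w \<in> cball z (d/2)" "w \<in> D" "u = X w" by auto
    have "dist w z < d" using w(1) d(1) by (simp add: dist_commute)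
    then have "\<bar>h w - h z\<bar> < \<eta>" using d(2) by (auto simp: dist_real_def)
    then have "h w > h z - \<eta>" by linarith
    then show "u \<in> {u. h z - \<eta> \<le> u $ i}" using b[OF w(2)] w(3) by auto
  qed
  then have "closure (convex hull (X ` (cball z (d/2) \<inter> D))) \<subseteq> {u. h z - \<eta> \<le> u $ i}"
    by (intro closure_minimal hull_minimal convex_comp_ge closed_comp_ge)
  with filippov_sub[OF v, of "d/2"] d(1) show "- v $ i \<le> - h z + \<eta>" by auto
  qed
  then show ?thesis by simp
qed

lemma filippov_eq:
  assumes v: "v \<in> filippov_set X D z" and h: "continuous (at z) h"
    and b: "\<And>w. w \<in> D \<Longrightarrow> X w $ i = h w"
  shows "v $ i = h z"
  using filippov_le[OF v h, of i] filippov_ge[OF v h, of i] b by force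




definition plip :: "(real \<Rightarrow> real) \<Rightarrow> real set \<Rightarrow> real \<Rightarrow> bool" where
  "plip f S t \<longleftrightarrow> (\<exists>r>0. \<exists>B. \<forall>s\<in>S. \<bar>s - t\<bar> < r \<longrightarrow> \<bar>f s - f t\<bar> \<le> B * \<bar>s - t\<bar>)"

lemma plip_cont:
  assumes "plip f S t" shows "continuous (at t within S) f"
proof -
  obtain r B where rB: "r > 0" "\<And>s. s \<in> S \<Longrightarrow> \<bar>s - t\<bar> < r \<Longrightarrow> \<bar>f s - f t\<bar> \<le> B * \<bar>s - t\<bar>"
    using assms unfolding plip_def by blast
  show ?thesis
    unfolding continuous_within_eps_delta
  proof (intro allI impI)
    fix e :: real assume e: "e > 0"
    define d where "d = min r (e / (\<bar>B\<bar> + 1))"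
    have d: "d > 0" using rB(1) e by (simp add: d_def)
    show "\<exists>d>0. \<forall>x'\<in>S. dist x' t < d \<longrightarrow> dist (f x') (f t) < e"
    proof (intro exI[of _ d] conjI ballI impI d)
      fix s assume s: "s \<in> S" "dist s t < d"
      then have "\<bar>s - t\<bar> < r" "\<bar>s - t\<bar> < e / (\<bar>B\<bar> + 1)" by (auto simp: d_def dist_real_def)
      then have "\<bar>f s - f t\<bar> \<le> B * \<bar>s - t\<bar>" using rB(2) s by auto
      also have "\<dots> \<le> (\<bar>B\<bar> + 1) * \<bar>s - t\<bar>" by (intro mult_right_mono) auto
      also have "\<dots> < (\<bar>B\<bar> + 1) * (e / (\<bar>B\<bar> + 1))"
        using \<open>\<bar>s - t\<bar> < e / (\<bar>B\<bar> + 1)\<close> by (intro mult_strict_left_mono) auto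
      also have "\<dots> = e" by (simp add: field_simps)
      finally show "dist (f s) (f t) < e" by (simp add: dist_real_def)
    qed
  qed
qed

lemma plip_cont_on:
  assumes "\<And>t. t \<in> S \<Longrightarrow> plip f S t" shows "continuous_on S f"
  using assms plip_cont continuous_on_eq_continuous_within by blast

lemma mono_strict:
  fixes \<phi> :: "real \<Rightarrow> real"
  assumes ab: "a \<le> b" and pl: "\<And>t. t \<in> {a..b} \<Longrightarrow> plip \<phi> {a..b} t"
    and N: "N \<in> null_sets lborel"
    and der: "\<And>t. t \<in> {a<..<b} \<Longrightarrow> t \<notin> N \<Longrightarrow> \<exists>d. (\<phi> has_real_derivative d) (at t) \<and> d < 0"
  shows "\<phi> b \<le> \<phi> a"
proof (rule ccontr)
  assume "\<not> \<phi> b \<le> \<phi> a"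
  then have lt: "\<phi> a < \<phi> b" by simp
  have cont: "continuous_on {a..b} \<phi>" using pl by (rule plip_cont_on)
  define N' where "N' = N \<inter> {a..b}"
  have "negligible N"
    using N by (simp add: negligible_iff_null_sets null_sets_completionI)
  then have nN': "negligible N'" unfolding N'_def by (rule negligible_subset) auto
  have "negligible (\<phi> ` N')"
  proof (rule negligible_locally_Lipschitz_image[OF _ nN'])
    fix x assume "x \<in> N'"
    then have "x \<in> {a..b}" by (simp add: N'_def)
    then obtain r B where rB: "r > 0" "\<And>s. s \<in> {a..b} \<Longrightarrow> \<bar>s - x\<bar> < r \<Longrightarrow> \<bar>\<phi> s - \<phi> x\<bar> \<le> B * \<bar>s - x\<bar>"
      using pl unfolding plip_def by blast
    show "\<exists>T B. open T \<and> x \<in> T \<and> (\<forall>y\<in>N' \<inter> T. norm (\<phi> y - \<phi> x) \<le> B * norm (y - x))"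
      apply (rule exI[of _ "ball x r"], rule exI[of _ B])
      using rB by (auto simp: N'_def dist_real_def)
  qed auto
  moreover have "\<not> negligible {\<phi> a<..<\<phi> b}"
    using negligible_interval(2)[of "\<phi> a" "\<phi> b"] lt by auto
  ultimately have "\<not> {\<phi> a<..<\<phi> b} \<subseteq> \<phi> ` N'"
    using negligible_subset by blast
  then obtain y where y: "\<phi> a < y" "y < \<phi> b" "y \<notin> \<phi> ` N'" by (auto simp: subset_iff)
  define S where "S = {t \<in> {a..b}. \<phi> t = y}"
  have "closed S" unfolding S_def
    by (rule continuous_closed_preimage_constant[OF cont]) auto
  have "S \<noteq> {}" using IVT'[of \<phi> a y b] y ab cont by (auto simp: S_def)
  have bdd: "bdd_above S" unfolding S_def by (rule bdd_aboveI[of _ b]) auto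
  define s where "s = Sup S"
  have sS: "s \<in> S" unfolding s_def by (rule closed_contains_Sup[OF \<open>S \<noteq> {}\<close> bdd \<open>closed S\<close>])
  then have s: "a \<le> s" "s \<le> b" "\<phi> s = y" by (auto simp: S_def)
  have "s \<noteq> b" "s \<noteq> a" using s y by auto
  then have sab: "s \<in> {a<..<b}" using s by auto
  have "s \<notin> N" using y(3) s sab by (auto simp: N'_def)
  then obtain d where d: "(\<phi> has_real_derivative d) (at s)" "d < 0" using der sab by blast
  obtain \<delta> where \<delta>: "\<delta> > 0" "\<And>h. h > 0 \<Longrightarrow> h < \<delta> \<Longrightarrow> \<phi> s > \<phi> (s + h)"
    using DERIV_neg_dec_right[OF d] by blast
  define t where "t = s + min (\<delta>/2) ((b - s)/2)"
  have m1: "min (\<delta>/2) ((b - s)/2) \<le> (b - s)/2" by (rule min.cobounded2)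
  have m2: "min (\<delta>/2) ((b - s)/2) > 0" using sab \<delta>(1) by simp
  have t: "s < t" "t \<le> b" unfolding t_def using m1 m2 sab by auto
  have "\<phi> t < y" using \<delta>(2)[of "min (\<delta>/2) ((b - s)/2)"] sab \<delta>(1) s(3) by (auto simp: t_def)
  moreover have "continuous_on {t..b} \<phi>" using cont t s by (auto intro: continuous_on_subset)
  ultimately obtain x where x: "t \<le> x" "x \<le> b" "\<phi> x = y"
    using IVT'[of \<phi> t y b] y t by auto
  then have "x \<in> S" using t s by (auto simp: S_def)
  then have "x \<le> s" unfolding s_def by (rule cSup_upper[OF _ bdd])
  then show False using x t by auto
qed

lemma plip_diff_lin:
  assumes "plip f S t" shows "plip (\<lambda>s. f s - c * s) S t"
proof -
  obtain r B where rB: "r > 0" "\<And>s. s \<in> S \<Longrightarrow> \<bar>s - t\<bar> < r \<Longrightarrow> \<bar>f s - f t\<bar> \<le> B * \<bar>s - t\<bar>"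
    using assms unfolding plip_def by blast
  have "\<bar>(f s - c * s) - (f t - c * t)\<bar> \<le> (B + \<bar>c\<bar>) * \<bar>s - t\<bar>" if "s \<in> S" "\<bar>s - t\<bar> < r" for s
  proof -
    have "\<bar>(f s - c * s) - (f t - c * t)\<bar> \<le> \<bar>f s - f t\<bar> + \<bar>c * (s - t)\<bar>" by (simp add: algebra_simps)
    also have "\<dots> \<le> B * \<bar>s - t\<bar> + \<bar>c\<bar> * \<bar>s - t\<bar>" using rB(2)[OF that] by (simp add: abs_mult)
    finally show ?thesis by (simp add: algebra_simps)
  qed
  then show ?thesis unfolding plip_def using rB(1) by blast
qed

lemma mono_ae:
  fixes \<phi> :: "real \<Rightarrow> real"
  assumes ab: "a \<le> b" and pl: "\<And>t. t \<in> {a..b} \<Longrightarrow> plip \<phi> {a..b} t"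
    and ae: "AE t in lborel. t \<in> {a<..<b} \<longrightarrow> (\<exists>d. (\<phi> has_real_derivative d) (at t) \<and> d \<le> 0)"
  shows "\<phi> b \<le> \<phi> a"
proof (cases "a = b")
  case True then show ?thesis by simp
next
  case False
  then have ab': "a < b" using ab by simp
  from ae obtain N where N: "{t \<in> space lborel. \<not> (t \<in> {a<..<b} \<longrightarrow> (\<exists>d. (\<phi> has_real_derivative d) (at t) \<and> d \<le> 0))} \<subseteq> N"
    "N \<in> null_sets lborel" by (elim AE_E) (simp add: null_setsI)
  show ?thesis
  proof (rule field_le_epsilon)
    fix e :: real assume e: "e > 0"
    define c where "c = e / (b - a)"
    have c: "c > 0" using e ab' by (simp add: c_def)
    have "(\<lambda>s. \<phi> s - c * s) b \<le> (\<lambda>s. \<phi> s - c * s) a"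
    proof (rule mono_strict[OF ab _ N(2)])
      show "plip (\<lambda>s. \<phi> s - c * s) {a..b} t" if "t \<in> {a..b}" for t
        using pl[OF that] by (rule plip_diff_lin)
      fix t assume t: "t \<in> {a<..<b}" "t \<notin> N"
      then obtain d where d: "(\<phi> has_real_derivative d) (at t)" "d \<le> 0" using N(1) by auto
      have "((\<lambda>s. \<phi> s - c * s) has_real_derivative d - c * 1) (at t)"
        by (intro DERIV_diff d(1) DERIV_cmult DERIV_ident)
      then show "\<exists>d. ((\<lambda>s. \<phi> s - c * s) has_real_derivative d) (at t) \<and> d < 0"
        using d(2) c by force
    qed
    then have "\<phi> b \<le> \<phi> a + c * (b - a)" by (simp add: algebra_simps)
    also have "c * (b - a) = e" using ab' by (simp add: c_def)
    finally show "\<phi> b \<le> \<phi> a + e" .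
  qed
qed




lemma plip_const: "plip (\<lambda>s. c) S t"
  unfolding plip_def by (rule exI[of _ 1]) (auto intro: exI[of _ 0])

lemma plip_subset: "plip f T t \<Longrightarrow> S \<subseteq> T \<Longrightarrow> plip f S t"
  unfolding plip_def by blast

lemma plip_add:
  assumes "plip f S t" "plip g S t" shows "plip (\<lambda>s. f s + g s) S t"
proof -
  obtain r1 B1 where 1: "r1 > 0" "\<And>s. s \<in> S \<Longrightarrow> \<bar>s - t\<bar> < r1 \<Longrightarrow> \<bar>f s - f t\<bar> \<le> B1 * \<bar>s - t\<bar>"
    using assms(1) unfolding plip_def by blast
  obtain r2 B2 where 2: "r2 > 0" "\<And>s. s \<in> S \<Longrightarrow> \<bar>s - t\<bar> < r2 \<Longrightarrow> \<bar>g s - g t\<bar> \<le> B2 * \<bar>s - t\<bar>"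
    using assms(2) unfolding plip_def by blast
  have "\<bar>(f s + g s) - (f t + g t)\<bar> \<le> (B1 + B2) * \<bar>s - t\<bar>" if "s \<in> S" "\<bar>s - t\<bar> < min r1 r2" for s
  proof -
    have "\<bar>(f s + g s) - (f t + g t)\<bar> \<le> \<bar>f s - f t\<bar> + \<bar>g s - g t\<bar>" by simp
    also have "\<dots> \<le> B1 * \<bar>s - t\<bar> + B2 * \<bar>s - t\<bar>" using 1(2) 2(2) that by (intro add_mono) auto
    finally show ?thesis by (simp add: algebra_simps)
  qed
  then show ?thesis unfolding plip_def using 1(1) 2(1)
    by (intro exI[of _ "min r1 r2"]) auto
qed

lemma plip_mult:
  assumes "plip f S t" "plip g S t" shows "plip (\<lambda>s. f s * g s) S t"
proof -
  obtain r1 B1 where 1: "r1 > 0" "\<And>s. s \<in> S \<Longrightarrow> \<bar>s - t\<bar> < r1 \<Longrightarrow> \<bar>f s - f t\<bar> \<le> B1 * \<bar>s - t\<bar>"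
    using assms(1) unfolding plip_def by blast
  obtain r2 B2 where 2: "r2 > 0" "\<And>s. s \<in> S \<Longrightarrow> \<bar>s - t\<bar> < r2 \<Longrightarrow> \<bar>g s - g t\<bar> \<le> B2 * \<bar>s - t\<bar>"
    using assms(2) unfolding plip_def by blast
  define B where "B = (\<bar>f t\<bar> + \<bar>B1\<bar> * r1) * \<bar>B2\<bar> + \<bar>g t\<bar> * \<bar>B1\<bar>"
  have "\<bar>f s * g s - f t * g t\<bar> \<le> B * \<bar>s - t\<bar>" if s: "s \<in> S" "\<bar>s - t\<bar> < min r1 r2" for s
  proof -
    have "B1 * \<bar>s - t\<bar> \<le> \<bar>B1\<bar> * \<bar>s - t\<bar>" "B2 * \<bar>s - t\<bar> \<le> \<bar>B2\<bar> * \<bar>s - t\<bar>"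
      by (intro mult_right_mono; simp)+
    moreover have "\<bar>f s - f t\<bar> \<le> B1 * \<bar>s - t\<bar>" "\<bar>g s - g t\<bar> \<le> B2 * \<bar>s - t\<bar>"
      using 1(2)[of s] 2(2)[of s] s by auto
    ultimately have a: "\<bar>f s - f t\<bar> \<le> \<bar>B1\<bar> * \<bar>s - t\<bar>" and b: "\<bar>g s - g t\<bar> \<le> \<bar>B2\<bar> * \<bar>s - t\<bar>"
      by linarith+
    have "\<bar>B1\<bar> * \<bar>s - t\<bar> \<le> \<bar>B1\<bar> * r1" using s by (intro mult_left_mono) auto
    then have fs: "\<bar>f s\<bar> \<le> \<bar>f t\<bar> + \<bar>B1\<bar> * r1" using a by linarith
    have "f s * g s - f t * g t = f s * (g s - g t) + g t * (f s - f t)" by (simp add: algebra_simps)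
    then have "\<bar>f s * g s - f t * g t\<bar> \<le> \<bar>f s\<bar> * \<bar>g s - g t\<bar> + \<bar>g t\<bar> * \<bar>f s - f t\<bar>"
      by (simp add: abs_mult[symmetric] abs_triangle_ineq)
    also have "\<dots> \<le> (\<bar>f t\<bar> + \<bar>B1\<bar> * r1) * (\<bar>B2\<bar> * \<bar>s - t\<bar>) + \<bar>g t\<bar> * (\<bar>B1\<bar> * \<bar>s - t\<bar>)"
      using fs a b 1(1) by (intro add_mono mult_mono mult_left_mono) auto
    also have "\<dots> = B * \<bar>s - t\<bar>" by (simp add: B_def algebra_simps)
    finally show ?thesis .
  qed
  then show ?thesis unfolding plip_def using 1(1) 2(1)
    by (intro exI[of _ "min r1 r2"]) auto
qed

lemma plip_cmult: "plip f S t \<Longrightarrow> plip (\<lambda>s. c * f s) S t"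
  using plip_mult[OF plip_const] by blast

lemma plip_diff: "plip f S t \<Longrightarrow> plip g S t \<Longrightarrow> plip (\<lambda>s. f s - g s) S t"
  using plip_add[of f S t "\<lambda>s. (-1) * g s"] plip_cmult[of g S t "-1"] by simp




lemma plip_max0:
  assumes "plip f S t" shows "plip (\<lambda>s. max 0 (f s)) S t"
proof -
  obtain r B where 1: "r > 0" "\<And>s. s \<in> S \<Longrightarrow> \<bar>s - t\<bar> < r \<Longrightarrow> \<bar>f s - f t\<bar> \<le> B * \<bar>s - t\<bar>"
    using assms unfolding plip_def by blast
  have "\<bar>max 0 (f s) - max 0 (f t)\<bar> \<le> B * \<bar>s - t\<bar>" if "s \<in> S" "\<bar>s - t\<bar> < r" for s
  proof -
    have "\<bar>max 0 (f s) - max 0 (f t)\<bar> \<le> \<bar>f s - f t\<bar>" by (simp add: max_def abs_if)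
    then show ?thesis using 1(2)[OF that] by linarith
  qed
  then show ?thesis unfolding plip_def using 1(1) by blast
qed


lemma plip_deriv:
  assumes "(f has_real_derivative D) (at t)" shows "plip f S t"
proof -
  have "((\<lambda>y. (f y - f t) / (y - t)) \<longlongrightarrow> D) (at t)"
    using assms by (simp add: has_field_derivative_iff)
  then have "\<forall>\<^sub>F y in at t. dist ((f y - f t) / (y - t)) D < 1"
    by (rule tendstoD) simp
  then obtain d where d: "d > 0" "\<And>y. y \<noteq> t \<Longrightarrow> dist y t < d \<Longrightarrow> dist ((f y - f t) / (y - t)) D < 1"
    unfolding eventually_at by blast
  have "\<bar>f s - f t\<bar> \<le> (\<bar>D\<bar> + 1) * \<bar>s - t\<bar>" if "\<bar>s - t\<bar> < d" for s
  proof (cases "s = t")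
    case False
    then have "\<bar>(f s - f t) / (s - t) - D\<bar> < 1" using d(2)[of s] that by (auto simp: dist_real_def)
    then have "\<bar>(f s - f t) / (s - t)\<bar> \<le> \<bar>D\<bar> + 1" by linarith
    then have "\<bar>f s - f t\<bar> / \<bar>s - t\<bar> \<le> \<bar>D\<bar> + 1" by (simp add: abs_divide)
    then show ?thesis using False by (simp add: divide_le_eq)
  qed simp
  then show ?thesis unfolding plip_def using d(1) by blast
qed


lemma plip_comp:
  assumes "locally_lipschitz_on I z" "t \<in> I" "S \<subseteq> I"
  shows "plip (\<lambda>s. z s $ i) S t"
proof -
  obtain r L where rL: "r > 0" "\<forall>s1\<in>I \<inter> ball t r. \<forall>s2\<in>I \<inter> ball t r. dist (z s1) (z s2) \<le> L * dist s1 s2"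
    using assms(1,2) unfolding locally_lipschitz_on_def by blast
  have "\<bar>z s $ i - z t $ i\<bar> \<le> L * \<bar>s - t\<bar>" if "s \<in> S" "\<bar>s - t\<bar> < r" for s
  proof -
    have "\<bar>z s $ i - z t $ i\<bar> = \<bar>(z s - z t) $ i\<bar>" by simp
    also have "\<dots> \<le> norm (z s - z t)" by (rule component_le_norm_cart)
    also have "\<dots> \<le> L * dist s t" using rL(2) that assms(2,3) rL(1)
      by (auto simp: dist_norm dist_real_def abs_minus_commute)
    finally show ?thesis by (simp add: dist_real_def)
  qed
  then show ?thesis unfolding plip_def using rL(1) by blast
qed


lemma deriv_comp:
  assumes "(z has_vector_derivative v) (at t)"
  shows "((\<lambda>s. z s $ i) has_real_derivative v $ i) (at t)"
proof -
  have "((\<lambda>s. z s $ i) has_derivative (\<lambda>x. (x *\<^sub>R v) $ i)) (at t)"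
    using bounded_linear.has_derivative[OF bounded_linear_vec_nth, of z "\<lambda>x. x *\<^sub>R v"] assms
    unfolding has_vector_derivative_def by blast
  moreover have "(\<lambda>x. (x *\<^sub>R v) $ i) = (*) (v $ i)" by (auto simp: mult.commute)
  ultimately show ?thesis by (simp add: has_field_derivative_def)
qed


lemma along:
  fixes \<phi> :: "real \<Rightarrow> real"
  assumes fs: "filippov_solution X D I z" and ab: "a \<in> I" "b \<in> I" "a \<le> b"
    and pl: "\<And>t. t \<in> {a..b} \<Longrightarrow> plip \<phi> {a..b} t"
    and der: "\<And>t v. t \<in> {a<..<b} \<Longrightarrow> z t \<in> D \<Longrightarrow> (z has_vector_derivative v) (at t) \<Longrightarrow>
        v \<in> filippov_set X D (z t) \<Longrightarrow> \<exists>d. (\<phi> has_real_derivative d) (at t) \<and> d \<le> 0"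
  shows "\<phi> b \<le> \<phi> a"
proof (rule mono_ae[OF ab(3) pl])
  have I: "is_interval I" "\<forall>t\<in>I. z t \<in> D"
    and ae: "AE t in lborel. t \<in> I \<longrightarrow>
        (\<exists>v. (z has_vector_derivative v) (at t within I) \<and> v \<in> filippov_set X D (z t))"
    using fs unfolding filippov_solution_def by blast+
  have sub: "{a..b} \<subseteq> I"
  proof
    fix x assume "x \<in> {a..b}"
    then show "x \<in> I" using mem_is_interval_1_I[OF I(1) ab(1) ab(2)] by simp
  qed
  have int: "{a<..<b} \<subseteq> interior I"
    by (rule interior_maximal) (use sub in auto)
  show "AE t in lborel. t \<in> {a<..<b} \<longrightarrow> (\<exists>d. (\<phi> has_real_derivative d) (at t) \<and> d \<le> 0)"
    using ae
  proof (rule eventually_mono)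
    fix t assume h: "t \<in> I \<longrightarrow> (\<exists>v. (z has_vector_derivative v) (at t within I) \<and> v \<in> filippov_set X D (z t))"
    show "t \<in> {a<..<b} \<longrightarrow> (\<exists>d. (\<phi> has_real_derivative d) (at t) \<and> d \<le> 0)"
    proof
      assume t: "t \<in> {a<..<b}"
      then have tI: "t \<in> I" "t \<in> interior I" using sub int by auto
      then obtain v where v: "(z has_vector_derivative v) (at t within I)" "v \<in> filippov_set X D (z t)"
        using h by blast
      have v': "(z has_vector_derivative v) (at t)" using v(1) at_within_interior[OF tI(2)] by simp
      have "z t \<in> D" using I(2) tI(1) by blast
      then show "\<exists>d. (\<phi> has_real_derivative d) (at t) \<and> d \<le> 0"
        using der[OF t _ v' v(2)] by blast
    qed
  qed
qed




lemma plip_divc: "plip f S t \<Longrightarrow> plip (\<lambda>s. f s / c) S t"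
  using plip_cmult[of f S t "1/c"] by simp

lemma dmax2: "((\<lambda>x::real. max 0 x * max 0 x) has_real_derivative 2 * max 0 x) (at x)"
proof (cases "x = 0")
  case True
  have "((\<lambda>y. (max 0 y * max 0 y - max 0 0 * max 0 0) / (y - 0)) \<longlongrightarrow> 0) (at (0::real))"
  proof (rule Lim_null_comparison)
    show "\<forall>\<^sub>F y in at 0. norm ((max 0 y * max 0 y - max 0 0 * max 0 0) / (y - 0)) \<le> \<bar>y\<bar>"
      by (rule always_eventually) (auto simp: max_def abs_mult)
    show "((\<lambda>y::real. \<bar>y\<bar>) \<longlongrightarrow> 0) (at 0)"
      using tendsto_rabs[OF tendsto_ident_at[of 0 UNIV]] by simp
  qed
  then show ?thesis using True by (simp add: has_field_derivative_iff)
next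
  case False
  show ?thesis
  proof (cases "x > 0")
    case True
    have "((\<lambda>x::real. x * x) has_real_derivative 2 * x) (at x)"
      by (auto intro!: derivative_eq_intros)
    moreover have ev: "\<forall>\<^sub>F y in nhds x. max 0 y * max 0 y = y * y"
    proof -
      have "\<forall>\<^sub>F y in nhds x. y \<in> {0<..}" using True by (intro eventually_nhds_in_open) auto
      then show ?thesis by (rule eventually_mono) auto
    qed
    moreover have "2 * max 0 x = 2 * x" using True by simp
    moreover have "((\<lambda>x::real. max 0 x * max 0 x) has_real_derivative 2*x) (at x) \<longleftrightarrow> ((\<lambda>x. x * x) has_real_derivative 2*x) (at x)"
      by (rule DERIV_cong_ev[OF refl _ refl]) fact
    ultimately show ?thesis by simp
  next
    case False
    then have x: "x < 0" using \<open>x \<noteq> 0\<close> by simp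
    have "\<forall>\<^sub>F y in nhds x. max 0 y * max 0 y = 0"
    proof -
      have "\<forall>\<^sub>F y in nhds x. y \<in> {..<0}" using x by (intro eventually_nhds_in_open) auto
      then show ?thesis by (rule eventually_mono) auto
    qed
    then have "((\<lambda>x::real. max 0 x * max 0 x) has_real_derivative 0) (at x) \<longleftrightarrow> ((\<lambda>_. 0) has_real_derivative 0) (at x)"
      by (rule DERIV_cong_ev[OF refl _ refl])
    moreover have "2 * max 0 x = 0" using x by simp
    ultimately show ?thesis by simp
  qed
qed




locale model =
  fixes \<beta>E \<nu>E \<delta>E \<delta>M \<delta>F \<delta>s K \<nu> \<gamma>s lam :: real
  assumes pos: "\<beta>E > 0" "\<nu>E > 0" "\<delta>E > 0" "\<delta>M > 0" "\<delta>F > 0" "\<delta>s > 0" "K > 0" "0 < \<nu>" "\<nu> < 1" "0 < \<gamma>s"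
    and R0': "\<beta>E * \<nu> * \<nu>E > \<delta>F * (\<nu>E + \<delta>E)"
    and lam': "lam * (\<gamma>s * \<delta>F * (\<nu>E + \<delta>E)) > \<delta>s * (\<beta>E * \<nu> * \<nu>E - \<delta>F * (\<nu>E + \<delta>E))"
begin

definition "a = \<nu>E + \<delta>E"
definition "Dd = \<beta>E * \<nu> * \<nu>E - \<delta>F * a"
definition "\<kappa> = \<gamma>s * \<delta>F * a / Dd"
definition "c0 = (1 - \<nu>) * \<nu>E"
definition "\<rho> = \<kappa> / (\<kappa> + \<gamma>s)"
definition "X = closed_loop \<beta>E \<nu>E \<delta>E \<delta>M \<delta>F \<delta>s K \<nu> \<gamma>s lam"
definition "g1 (z::real^4) = \<beta>E * z$3 * (1 - z$1 / K) - a * z$1"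
definition "g2 (z::real^4) = z$2 - \<kappa> * z$4"
definition "g3 (z::real^4) = c0 * z$1 - \<delta>M * z$2"
definition "Cg = \<nu> * \<nu>E * \<gamma>s / ((\<kappa> + \<gamma>s) * c0)"
definition "\<Phi> (z::real^4) = \<nu> * \<nu>E * \<rho> * z$1 + Cg * (\<delta>M * max 0 (g2 z) + max 0 (g3 z)) - \<delta>F * z$3"

lemma a_pos: "a > 0" using pos by (simp add: a_def)
lemma Dd_pos: "Dd > 0" using R0' by (simp add: Dd_def a_def)
lemma kappa_pos: "\<kappa> > 0" using pos a_pos Dd_pos by (simp add: \<kappa>_def)
lemma c0_pos: "c0 > 0" using pos by (simp add: c0_def)
lemma Cg_pos: "Cg > 0" using pos kappa_pos c0_pos by (simp add: Cg_def)
lemma rho_pos: "\<rho> > 0" using pos kappa_pos by (simp add: \<rho>_def)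

lemma kl: "\<kappa> * lam > \<delta>s"
proof -
  have "\<kappa> * lam = lam * (\<gamma>s * \<delta>F * a) / Dd" by (simp add: \<kappa>_def)
  moreover have "lam * (\<gamma>s * \<delta>F * a) > \<delta>s * Dd" using lam' by (simp add: a_def Dd_def)
  ultimately show ?thesis using Dd_pos by (simp add: pos_less_divide_eq)
qed

lemma rho_eq: "\<nu> * \<nu>E * \<rho> = \<delta>F * a / \<beta>E"
proof -
  have "\<kappa> + \<gamma>s = \<gamma>s * (\<beta>E * \<nu> * \<nu>E) / Dd"
    using Dd_pos by (simp add: \<kappa>_def Dd_def field_simps)
  then have "\<rho> = \<delta>F * a / (\<beta>E * \<nu> * \<nu>E)"
    using Dd_pos pos by (simp add: \<rho>_def \<kappa>_def field_simps)
  then show ?thesis using pos by (simp add: field_simps)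
qed

lemma X1: "X w $ 1 = g1 w" by (simp add: X_def closed_loop_def Let_def g1_def a_def)
lemma X2: "X w $ 2 = g3 w" by (simp add: X_def closed_loop_def Let_def g3_def c0_def)
lemma X4: "X w $ 4 = lam * w$2 - \<delta>s * w$4" by (simp add: X_def closed_loop_def Let_def)
lemma X3: "X w $ 3 = \<nu> * \<nu>E * w$1 * (w$2 / (w$2 + \<gamma>s * w$4)) - \<delta>F * w$3"
  by (simp add: X_def closed_loop_def Let_def)

lemma D_nonneg: "w \<in> Dprime \<Longrightarrow> w$1 \<ge> 0 \<and> w$2 \<ge> 0 \<and> w$3 \<ge> 0 \<and> w$4 \<ge> 0"
  by (simp add: Dprime_def)

lemma X3_le: assumes "w \<in> Dprime" shows "X w $ 3 \<le> \<Phi> w"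
proof -
  define E where "E = w$1"
  define M where "M = w$2"
  define F where "F = w$3"
  define Ms where "Ms = w$4"
  have nn: "E \<ge> 0" "M \<ge> 0" "F \<ge> 0" "Ms \<ge> 0" using D_nonneg[OF assms] by (auto simp: E_def M_def F_def Ms_def)
  define S where "S = M + \<gamma>s * Ms"
  have S0: "S \<ge> 0" using nn pos by (simp add: S_def)
  have rest: "Cg * (\<delta>M * max 0 (g2 w) + max 0 (g3 w)) \<ge> 0"
    using Cg_pos pos by simp
  have key: "E * (M / S) \<le> \<rho> * E + \<gamma>s / ((\<kappa> + \<gamma>s) * c0) * (\<delta>M * max 0 (g2 w) + max 0 (g3 w))"
  proof (cases "S = 0")
    case True
    then show ?thesis using nn rho_pos pos kappa_pos c0_pos by simp
  next
    case False
    then have Sp: "S > 0" using S0 by simp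
    have MS: "M \<le> S" using nn pos by (simp add: S_def)
    have eq: "E * (M / S) - \<rho> * E = \<gamma>s / (\<kappa> + \<gamma>s) * (E * g2 w / S)"
      using Sp kappa_pos pos
      by (simp add: \<rho>_def g2_def M_def Ms_def S_def field_simps)
    have bnd: "E * g2 w / S \<le> (\<delta>M * max 0 (g2 w) + max 0 (g3 w)) / c0"
    proof (cases "g2 w \<le> 0")
      case True
      then have "E * g2 w / S \<le> 0" using nn Sp by (simp add: divide_le_0_iff mult_nonneg_nonpos)
      moreover have "(\<delta>M * max 0 (g2 w) + max 0 (g3 w)) / c0 \<ge> 0" using pos c0_pos by simp
      ultimately show ?thesis by linarith
    next
      case False
      then have g2p: "g2 w > 0" by simp
      have g2M: "g2 w \<le> M" using kappa_pos nn by (simp add: g2_def M_def Ms_def)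
      have Eb: "c0 * E \<le> \<delta>M * M + max 0 (g3 w)" by (simp add: g3_def E_def M_def)
      have "c0 * (E * g2 w) \<le> (\<delta>M * M + max 0 (g3 w)) * g2 w"
        using Eb g2p by (simp add: mult.assoc[symmetric] mult_right_mono)
      also have "\<dots> = \<delta>M * (M * g2 w) + max 0 (g3 w) * g2 w" by (simp add: algebra_simps)
      also have "\<dots> \<le> \<delta>M * (S * g2 w) + max 0 (g3 w) * S"
        using MS g2p g2M pos
        by (intro add_mono mult_left_mono mult_right_mono) auto
      also have "\<dots> = S * (\<delta>M * max 0 (g2 w) + max 0 (g3 w))" using g2p by (simp add: algebra_simps)
      finally have "c0 * (E * g2 w) \<le> S * (\<delta>M * max 0 (g2 w) + max 0 (g3 w))" .
      then show ?thesis using Sp c0_pos by (simp add: field_simps)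
    qed
    have "E * (M / S) = \<rho> * E + \<gamma>s / (\<kappa> + \<gamma>s) * (E * g2 w / S)" using eq by simp
    also have "\<dots> \<le> \<rho> * E + \<gamma>s / (\<kappa> + \<gamma>s) * ((\<delta>M * max 0 (g2 w) + max 0 (g3 w)) / c0)"
      using bnd pos kappa_pos by (intro add_left_mono mult_left_mono) auto
    also have "\<dots> = \<rho> * E + \<gamma>s / ((\<kappa> + \<gamma>s) * c0) * (\<delta>M * max 0 (g2 w) + max 0 (g3 w))"
      by simp
    finally show ?thesis .
  qed
  have "X w $ 3 = \<nu> * \<nu>E * (E * (M / S)) - \<delta>F * F"
    by (simp add: X3 E_def M_def F_def Ms_def S_def)
  also have "\<dots> \<le> \<nu> * \<nu>E * (\<rho> * E + \<gamma>s / ((\<kappa> + \<gamma>s) * c0) * (\<delta>M * max 0 (g2 w) + max 0 (g3 w))) - \<delta>F * F"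
    using key pos by (intro diff_right_mono mult_left_mono) auto
  also have "\<dots> = \<Phi> w"
    using kappa_pos c0_pos pos by (simp add: \<Phi>_def Cg_def E_def F_def field_simps)
  finally show ?thesis .
qed

lemma cont_g1: "continuous (at w) g1"
  unfolding g1_def using pos by (intro continuous_intros) auto
lemma cont_g2: "continuous (at w) g2"
  unfolding g2_def by (intro continuous_intros)
lemma cont_g3: "continuous (at w) g3"
  unfolding g3_def by (intro continuous_intros)
lemma cont_Phi: "continuous (at w) \<Phi>"
  unfolding \<Phi>_def g2_def g3_def by (intro continuous_intros)
lemmas cont_g = cont_g1 cont_g2 cont_g3 cont_Phi

lemma fil:
  assumes "w \<in> Dprime" "v \<in> filippov_set X Dprime w"
  shows "v$1 = g1 w" "v$2 = g3 w" "v$4 = lam * w$2 - \<delta>s * w$4" "v$3 \<le> \<Phi> w"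
proof -
  show "v$1 = g1 w" by (rule filippov_eq[OF assms(2) cont_g(1)]) (simp add: X1)
  show "v$2 = g3 w" by (rule filippov_eq[OF assms(2) cont_g(3)]) (simp add: X2)
  show "v$4 = lam * w$2 - \<delta>s * w$4"
    by (rule filippov_eq[OF assms(2)]) (auto intro!: continuous_intros simp: X4)
  show "v$3 \<le> \<Phi> w" by (rule filippov_le[OF assms(2) cont_g(4)]) (rule X3_le)
qed

end



lemma dsq: "(f has_real_derivative D) (at t) \<Longrightarrow>
   ((\<lambda>s. max 0 (f s) * max 0 (f s)) has_real_derivative 2 * max 0 (f t) * D) (at t)"
  by (rule DERIV_chain2[OF dmax2])

context model begin

definition "Dg1 (w::real^4) (v::real^4) = \<beta>E * v$3 * (1 - w$1 / K) - \<beta>E * w$3 * v$1 / K - a * v$1"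
definition "Dg2 (w::real^4) (v::real^4) = v$2 - \<kappa> * v$4"
definition "Dg3 (w::real^4) (v::real^4) = c0 * v$1 - \<delta>M * v$2"
definition "V w = max 0 (g1 w) * max 0 (g1 w) + max 0 (g2 w) * max 0 (g2 w) + max 0 (g3 w) * max 0 (g3 w)"
definition "L = \<beta>E * Cg * \<delta>M + \<beta>E * Cg + 1 + c0"
definition "MM = Mset \<beta>E \<nu>E \<delta>E \<delta>M K \<nu> \<kappa>"

lemma MM_iff: "w \<in> MM \<longleftrightarrow> w \<in> Dprime \<and> g1 w \<le> 0 \<and> g2 w \<le> 0 \<and> g3 w \<le> 0"
  by (auto simp: MM_def Mset_def T1_def T2_def T3_def g1_def g2_def g3_def a_def c0_def)

lemma der_g1: "(z has_vector_derivative v) (at t) \<Longrightarrow> ((\<lambda>s. g1 (z s)) has_real_derivative Dg1 (z t) v) (at t)"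
  unfolding g1_def Dg1_def using pos(7)
  by (auto intro!: derivative_eq_intros deriv_comp simp: field_simps)

lemma der_g2: "(z has_vector_derivative v) (at t) \<Longrightarrow> ((\<lambda>s. g2 (z s)) has_real_derivative Dg2 (z t) v) (at t)"
  unfolding g2_def Dg2_def
  by (auto intro!: derivative_eq_intros deriv_comp simp: algebra_simps)

lemma der_g3: "(z has_vector_derivative v) (at t) \<Longrightarrow> ((\<lambda>s. g3 (z s)) has_real_derivative Dg3 (z t) v) (at t)"
  unfolding g3_def Dg3_def
  by (auto intro!: derivative_eq_intros deriv_comp simp: algebra_simps)


lemma Vdot_le:
  assumes w: "w \<in> Dprime" and v1: "v$1 = g1 w" and v2: "v$2 = g3 w"
    and v4: "v$4 = lam * w$2 - \<delta>s * w$4" and v3: "v$3 \<le> \<Phi> w"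
  shows "2 * max 0 (g1 w) * Dg1 w v + 2 * max 0 (g2 w) * Dg2 w v + 2 * max 0 (g3 w) * Dg3 w v \<le> L * V w"
proof -
  define E where "E = w$1"
  define M where "M = w$2"
  define F where "F = w$3"
  define Ms where "Ms = w$4"
  have nn: "E \<ge> 0" "M \<ge> 0" "F \<ge> 0" "Ms \<ge> 0" using D_nonneg[OF w] by (auto simp: E_def M_def F_def Ms_def)
  define x1 where "x1 = max 0 (g1 w)"
  define x2 where "x2 = max 0 (g2 w)"
  define x3 where "x3 = max 0 (g3 w)"
  have x0: "x1 \<ge> 0" "x2 \<ge> 0" "x3 \<ge> 0" by (auto simp: x1_def x2_def x3_def)
  have t1: "2 * x1 * Dg1 w v \<le> 2 * x1 * (\<beta>E * Cg * (\<delta>M * x2 + x3))"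
  proof (cases "g1 w \<le> 0")
    case True then show ?thesis by (simp add: x1_def)
  next
    case False
    then have g1p: "g1 w > 0" by simp
    have EK: "E < K"
    proof (rule ccontr)
      assume "\<not> E < K"
      then have "1 - E / K \<le> 0" using pos(7) by simp
      then have "\<beta>E * F * (1 - E / K) \<le> 0" using pos(1) nn by (simp add: mult_nonneg_nonpos)
      moreover have "a * E > 0" using a_pos \<open>\<not> E < K\<close> pos(7) by simp
      ultimately show False using g1p by (simp add: g1_def E_def F_def)
    qed
    define q where "q = 1 - E / K"
    have q: "q > 0" "q \<le> 1" using EK nn pos(7) by (auto simp: q_def)
    have g1e: "g1 w = \<beta>E * F * q - a * E" by (simp add: g1_def q_def E_def F_def)
    have "Dg1 w v = \<beta>E * q * v$3 - (\<beta>E * F / K + a) * g1 w"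
      by (simp add: Dg1_def v1 q_def E_def F_def algebra_simps)
    also have "\<dots> \<le> \<beta>E * q * \<Phi> w"
    proof -
      have "\<beta>E * q * v$3 \<le> \<beta>E * q * \<Phi> w" using v3 q pos(1) by (intro mult_left_mono) auto
      moreover have "(\<beta>E * F / K + a) * g1 w \<ge> 0" using g1p a_pos pos nn by simp
      ultimately show ?thesis by linarith
    qed
    also have "\<beta>E * q * \<Phi> w = q * (\<delta>F * (a * E - \<beta>E * F)) + q * (\<beta>E * Cg * (\<delta>M * x2 + x3))"
    proof -
      have r: "\<beta>E * (\<nu> * (\<nu>E * \<rho>)) = \<delta>F * a" using rho_eq pos(1) by (simp add: field_simps)
      show ?thesis using pos(1) r by (simp add: \<Phi>_def x2_def x3_def E_def F_def field_simps)
    qed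
    also have "\<dots> \<le> 0 + 1 * (\<beta>E * Cg * (\<delta>M * x2 + x3))"
    proof (intro add_mono)
      have "\<beta>E * F * q \<le> \<beta>E * F" using q pos(1) nn by (simp add: mult_left_le)
      then have "a * E - \<beta>E * F \<le> 0" using g1p g1e by linarith
      then show "q * (\<delta>F * (a * E - \<beta>E * F)) \<le> 0" using q pos(5) by (simp add: mult_nonneg_nonpos)
      show "q * (\<beta>E * Cg * (\<delta>M * x2 + x3)) \<le> 1 * (\<beta>E * Cg * (\<delta>M * x2 + x3))"
        using q pos Cg_pos x0 by (intro mult_right_mono) auto
    qed
    finally have "Dg1 w v \<le> \<beta>E * Cg * (\<delta>M * x2 + x3)" by simp
    then show ?thesis using x0 by (intro mult_left_mono) auto
  qed
  have t2: "2 * x2 * Dg2 w v \<le> 2 * x2 * x3"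
  proof (cases "g2 w \<le> 0")
    case True then show ?thesis by (simp add: x2_def)
  next
    case False
    then have "\<kappa> * Ms < M" by (simp add: g2_def M_def Ms_def)
    then have a1: "\<delta>s * (\<kappa> * Ms) \<le> \<delta>s * M" using pos(6) by simp
    have a2: "\<delta>s * M \<le> \<kappa> * lam * M" using kl nn by (intro mult_right_mono) auto
    have "Dg2 w v = g3 w - \<kappa> * lam * M + \<delta>s * (\<kappa> * Ms)"
      by (simp add: Dg2_def v2 v4 M_def Ms_def algebra_simps)
    also have "\<dots> \<le> x3" using a1 a2 by (simp add: x3_def)
    finally show ?thesis using x0 by (intro mult_left_mono) auto
  qed
  have t3: "2 * x3 * Dg3 w v \<le> 2 * x3 * (c0 * x1)"
  proof (cases "g3 w \<le> 0")
    case True then show ?thesis by (simp add: x3_def)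
  next
    case False
    have "Dg3 w v = c0 * g1 w - \<delta>M * g3 w" by (simp add: Dg3_def v1 v2)
    also have "\<dots> \<le> c0 * x1"
    proof -
      have "c0 * g1 w \<le> c0 * x1" using c0_pos by (intro mult_left_mono) (auto simp: x1_def)
      moreover have "\<delta>M * g3 w \<ge> 0" using False pos(4) by simp
      ultimately show ?thesis by linarith
    qed
    finally show ?thesis using x0 by (intro mult_left_mono) auto
  qed
  have sq: "2 * x * y \<le> x * x + y * y" for x y :: real
    using sum_squares_ge_zero[of "x - y" 0] by (simp add: algebra_simps power2_eq_square)
  have "2 * x1 * (\<beta>E * Cg * (\<delta>M * x2 + x3)) + 2 * x2 * x3 + 2 * x3 * (c0 * x1)
      = (\<beta>E * Cg * \<delta>M) * (2 * x1 * x2) + (\<beta>E * Cg) * (2 * x1 * x3) + 2 * x2 * x3 + c0 * (2 * x3 * x1)"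
    by (simp add: algebra_simps)
  also have "\<dots> \<le> (\<beta>E * Cg * \<delta>M) * (x1*x1 + x2*x2) + (\<beta>E * Cg) * (x1*x1 + x3*x3) + (x2*x2 + x3*x3) + c0 * (x3*x3 + x1*x1)"
    using pos Cg_pos c0_pos by (intro add_mono mult_left_mono sq) auto
  also have "\<dots> \<le> L * (x1*x1 + x2*x2 + x3*x3)"
  proof -
    define S where "S = x1*x1 + x2*x2 + x3*x3"
    have sq0: "x1*x1 \<ge> 0" "x2*x2 \<ge> 0" "x3*x3 \<ge> 0" by simp_all
    have s12: "x1*x1 + x2*x2 \<le> S" and s13: "x1*x1 + x3*x3 \<le> S" and s23: "x2*x2 + x3*x3 \<le> S"
      and s31: "x3*x3 + x1*x1 \<le> S" using sq0 by (simp_all add: S_def)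
    have p1: "(\<beta>E * Cg * \<delta>M) * (x1*x1 + x2*x2) \<le> (\<beta>E * Cg * \<delta>M) * S"
      using pos Cg_pos by (intro mult_left_mono[OF s12]) simp
    have p2: "(\<beta>E * Cg) * (x1*x1 + x3*x3) \<le> (\<beta>E * Cg) * S"
      using pos Cg_pos by (intro mult_left_mono[OF s13]) simp
    have p3: "c0 * (x3*x3 + x1*x1) \<le> c0 * S"
      using c0_pos by (intro mult_left_mono[OF s31]) simp
    have "(\<beta>E * Cg * \<delta>M) * (x1*x1 + x2*x2) + (\<beta>E * Cg) * (x1*x1 + x3*x3) + (x2*x2 + x3*x3) + c0 * (x3*x3 + x1*x1)
        \<le> (\<beta>E * Cg * \<delta>M) * (x1*x1 + x2*x2 + x3*x3) + (\<beta>E * Cg) * (x1*x1 + x2*x2 + x3*x3) + (x1*x1 + x2*x2 + x3*x3) + c0 * (x1*x1 + x2*x2 + x3*x3)"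
      using p1 p2 p3 s23 unfolding S_def by linarith
    also have "\<dots> = L * (x1*x1 + x2*x2 + x3*x3)" by (simp add: L_def algebra_simps)
    finally show ?thesis .
  qed
  finally have "2 * x1 * (\<beta>E * Cg * (\<delta>M * x2 + x3)) + 2 * x2 * x3 + 2 * x3 * (c0 * x1) \<le> L * (x1*x1 + x2*x2 + x3*x3)" .
  moreover have "V w = x1*x1 + x2*x2 + x3*x3" by (simp add: V_def x1_def x2_def x3_def)
  ultimately have "2 * x1 * Dg1 w v + 2 * x2 * Dg2 w v + 2 * x3 * Dg3 w v \<le> L * V w"
    using t1 t2 t3 by (simp only:)
  then show ?thesis by (simp only: x1_def x2_def x3_def)
qed

end



context model begin

lemma fs_facts:
  assumes "filippov_solution X D I z"
  shows "is_interval I" "locally_lipschitz_on I z" "\<And>t. t \<in> I \<Longrightarrow> z t \<in> D"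
  using assms unfolding filippov_solution_def by auto

lemma interval_sub: "is_interval (I::real set) \<Longrightarrow> p \<in> I \<Longrightarrow> q \<in> I \<Longrightarrow> {p..q} \<subseteq> I"
proof
  fix x assume "is_interval I" "p \<in> I" "q \<in> I" "x \<in> {p..q}"
  then show "x \<in> I" using mem_is_interval_1_I[of I p q x] by simp
qed

lemma plip_V:
  assumes "locally_lipschitz_on I z" "t \<in> I" "S \<subseteq> I"
  shows "plip (\<lambda>s. V (z s)) S t"
  unfolding V_def g1_def g2_def g3_def
  by (intro plip_mult plip_add plip_diff plip_max0 plip_const plip_divc plip_comp[OF assms])

lemma V_deriv:
  assumes "(z has_vector_derivative v) (at t)"
  shows "((\<lambda>s. V (z s)) has_real_derivative
     2 * max 0 (g1 (z t)) * Dg1 (z t) v + 2 * max 0 (g2 (z t)) * Dg2 (z t) v + 2 * max 0 (g3 (z t)) * Dg3 (z t) v) (at t)"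
  unfolding V_def
  by (intro DERIV_add dsq der_g1 der_g2 der_g3 assms)

lemma V_MM: "w \<in> MM \<Longrightarrow> V w = 0"
  by (simp add: MM_iff V_def)

lemma V_zero: "w \<in> Dprime \<Longrightarrow> V w \<le> 0 \<Longrightarrow> w \<in> MM"
proof -
  assume w: "w \<in> Dprime" "V w \<le> 0"
  have "max 0 (g1 w) * max 0 (g1 w) \<ge> 0" "max 0 (g2 w) * max 0 (g2 w) \<ge> 0" "max 0 (g3 w) * max 0 (g3 w) \<ge> 0"
    by simp_all
  then have "max 0 (g1 w) * max 0 (g1 w) = 0" "max 0 (g2 w) * max 0 (g2 w) = 0" "max 0 (g3 w) * max 0 (g3 w) = 0"
    using w(2) unfolding V_def by linarith+
  then have "g1 w \<le> 0" "g2 w \<le> 0" "g3 w \<le> 0" by (simp_all add: max_def split: if_splits)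
  then show ?thesis using w(1) by (simp add: MM_iff)
qed

lemma invariance:
  assumes fs: "filippov_solution X Dprime I z" and z0: "0 \<in> I" "z 0 \<in> MM" and T: "T \<in> I" "T \<ge> 0"
  shows "z T \<in> MM"
proof -
  note ff = fs_facts[OF fs]
  have sub: "{0..T} \<subseteq> I" using interval_sub[OF ff(1) z0(1) T(1)] .
  define \<phi> where "\<phi> t = exp (- L * t) * V (z t)" for t
  have "\<phi> T \<le> \<phi> 0"
  proof (rule along[OF fs z0(1) T])
    fix t assume t: "t \<in> {0..T}"
    have e: "plip (\<lambda>s. exp (- L * s)) {0..T} t"
      by (rule plip_deriv) (auto intro!: derivative_eq_intros)
    have v: "plip (\<lambda>s. V (z s)) {0..T} t" using t sub by (intro plip_V[OF ff(2)]) auto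
    show "plip \<phi> {0..T} t" unfolding \<phi>_def by (rule plip_mult[OF e v])
  next
    fix t v assume t: "t \<in> {0<..<T}" and zt: "z t \<in> Dprime" and d: "(z has_vector_derivative v) (at t)"
      and fv: "v \<in> filippov_set X Dprime (z t)"
    note f = fil[OF zt fv]
    define Vd where "Vd = 2 * max 0 (g1 (z t)) * Dg1 (z t) v + 2 * max 0 (g2 (z t)) * Dg2 (z t) v + 2 * max 0 (g3 (z t)) * Dg3 (z t) v"
    have Vd: "Vd \<le> L * V (z t)" unfolding Vd_def by (rule Vdot_le[OF zt f(1,2,3,4)])
    have "((\<lambda>s. exp (- L * s)) has_real_derivative exp (- L * t) * (- L)) (at t)"
      by (auto intro!: derivative_eq_intros)
    from DERIV_mult[OF this V_deriv[OF d]]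
    have "(\<phi> has_real_derivative exp (- L * t) * (- L) * V (z t) + Vd * exp (- L * t)) (at t)"
      unfolding \<phi>_def Vd_def .
    moreover have "exp (- L * t) * (- L) * V (z t) + Vd * exp (- L * t) = exp (- L * t) * (Vd - L * V (z t))"
      by (simp add: algebra_simps)
    moreover have "exp (- L * t) * (Vd - L * V (z t)) \<le> 0"
      using Vd by (simp add: mult_nonneg_nonpos)
    ultimately show "\<exists>d. (\<phi> has_real_derivative d) (at t) \<and> d \<le> 0" by auto
  qed
  then have "exp (- L * T) * V (z T) \<le> 0" using V_MM[OF z0(2)] by (simp add: \<phi>_def)
  then have "V (z T) \<le> 0" by (simp add: mult_le_0_iff)
  then show ?thesis using V_zero ff(3)[OF T(1)] by blast
qed

end



context model begin

lemma lam_pos: "lam > 0"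
proof -
  have "\<kappa> * lam > 0" using kl pos(6) by linarith
  then show ?thesis using kappa_pos by (simp add: zero_less_mult_iff)
qed

lemma Phi_MM: "w \<in> MM \<Longrightarrow> \<Phi> w = \<delta>F * a / \<beta>E * w$1 - \<delta>F * w$3"
proof -
  assume "w \<in> MM"
  then have "max 0 (g2 w) = 0" "max 0 (g3 w) = 0" by (auto simp: MM_iff)
  then show ?thesis using rho_eq by (simp add: \<Phi>_def)
qed

lemma plipc:
  assumes fs: "filippov_solution X D I z" and "p \<in> I" "q \<in> I" "t \<in> {p..q}"
  shows "plip (\<lambda>s. z s $ i) {p..q} t"
proof -
  note ff = fs_facts[OF fs]
  have sub: "{p..q} \<subseteq> I" by (rule interval_sub[OF ff(1) assms(2,3)])
  show ?thesis using assms(4) sub by (intro plip_comp[OF ff(2)]) auto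
qed

lemma along_MM:
  fixes \<phi> :: "real \<Rightarrow> real"
  assumes fs: "filippov_solution X Dprime I z" and z0: "0 \<in> I" "z 0 \<in> MM"
    and pq: "p \<in> I" "q \<in> I" "0 \<le> p" "p \<le> q"
    and pl: "\<And>t. t \<in> {p..q} \<Longrightarrow> plip \<phi> {p..q} t"
    and der: "\<And>t v. t \<in> {p<..<q} \<Longrightarrow> z t \<in> MM \<Longrightarrow> (z has_vector_derivative v) (at t) \<Longrightarrow>
        v$1 = g1 (z t) \<Longrightarrow> v$2 = g3 (z t) \<Longrightarrow> v$4 = lam * z t $ 2 - \<delta>s * z t $ 4 \<Longrightarrow> v$3 \<le> \<Phi> (z t) \<Longrightarrow>
        \<exists>d. (\<phi> has_real_derivative d) (at t) \<and> d \<le> 0"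
  shows "\<phi> q \<le> \<phi> p"
proof (rule along[OF fs pq(1,2,4) pl])
  fix t v assume t: "t \<in> {p<..<q}" and zt: "z t \<in> Dprime" and d: "(z has_vector_derivative v) (at t)"
    and fv: "v \<in> filippov_set X Dprime (z t)"
  note ff = fs_facts[OF fs]
  have "t \<in> I" using interval_sub[OF ff(1) pq(1,2)] t by auto
  then have "z t \<in> MM" using invariance[OF fs z0] t pq(3) by auto
  then show "\<exists>d. (\<phi> has_real_derivative d) (at t) \<and> d \<le> 0"
    using der[OF t _ d fil[OF zt fv]] by blast
qed

lemma E_mono:
  assumes fs: "filippov_solution X Dprime I z" and z0: "0 \<in> I" "z 0 \<in> MM"
    and pq: "p \<in> I" "q \<in> I" "0 \<le> p" "p \<le> q"
  shows "z q $ 1 \<le> z p $ 1"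
proof (rule along_MM[OF fs z0 pq, where \<phi> = "\<lambda>s. z s $ 1"])
  show "plip (\<lambda>s. z s $ 1) {p..q} t" if "t \<in> {p..q}" for t by (rule plipc[OF fs pq(1,2) that])
  fix t v assume "z t \<in> MM" "(z has_vector_derivative v) (at t)" "v$1 = g1 (z t)"
  then show "\<exists>d. ((\<lambda>s. z s $ 1) has_real_derivative d) (at t) \<and> d \<le> 0"
    using deriv_comp[of z v t 1] by (auto simp: MM_iff)
qed

lemma M_mono:
  assumes fs: "filippov_solution X Dprime I z" and z0: "0 \<in> I" "z 0 \<in> MM"
    and pq: "p \<in> I" "q \<in> I" "0 \<le> p" "p \<le> q"
  shows "z q $ 2 \<le> z p $ 2"
proof (rule along_MM[OF fs z0 pq, where \<phi> = "\<lambda>s. z s $ 2"])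
  show "plip (\<lambda>s. z s $ 2) {p..q} t" if "t \<in> {p..q}" for t by (rule plipc[OF fs pq(1,2) that])
  fix t v assume "z t \<in> MM" "(z has_vector_derivative v) (at t)" "v$2 = g3 (z t)"
  then show "\<exists>d. ((\<lambda>s. z s $ 2) has_real_derivative d) (at t) \<and> d \<le> 0"
    using deriv_comp[of z v t 2] by (auto simp: MM_iff)
qed

lemma W_deriv_bound:
  fixes v :: "real^4"
  assumes "w \<in> MM" "v$1 = g1 w" "v$3 \<le> \<Phi> w"
  shows "v$1 + \<beta>E / \<delta>F * v$3 \<le> - (\<beta>E / K) * w$1 * w$3"
proof -
  have "\<beta>E / \<delta>F * v$3 \<le> \<beta>E / \<delta>F * \<Phi> w" using assms(3) pos by (intro mult_left_mono) auto
  also have "\<dots> = a * w$1 - \<beta>E * w$3" using Phi_MM[OF assms(1)] pos by (simp add: field_simps)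
  finally have "\<beta>E / \<delta>F * v$3 \<le> a * w$1 - \<beta>E * w$3" .
  moreover have "v$1 = \<beta>E * w$3 - (\<beta>E / K) * w$1 * w$3 - a * w$1"
    using assms(2) pos(7) by (simp add: g1_def field_simps)
  ultimately show ?thesis by linarith
qed

lemma W_mono:
  assumes fs: "filippov_solution X Dprime I z" and z0: "0 \<in> I" "z 0 \<in> MM"
    and pq: "p \<in> I" "q \<in> I" "0 \<le> p" "p \<le> q"
  shows "z q $ 1 + \<beta>E / \<delta>F * z q $ 3 \<le> z p $ 1 + \<beta>E / \<delta>F * z p $ 3"
proof (rule along_MM[OF fs z0 pq, where \<phi> = "\<lambda>s. z s $ 1 + \<beta>E / \<delta>F * z s $ 3"])
  show "plip (\<lambda>s. z s $ 1 + \<beta>E / \<delta>F * z s $ 3) {p..q} t" if "t \<in> {p..q}" for t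
    by (intro plip_add plip_cmult plipc[OF fs pq(1,2) that])
  fix t v assume m: "z t \<in> MM" and d: "(z has_vector_derivative v) (at t)" and v: "v$1 = g1 (z t)" "v$3 \<le> \<Phi> (z t)"
  have "((\<lambda>s. z s $ 1 + \<beta>E / \<delta>F * z s $ 3) has_real_derivative v$1 + \<beta>E / \<delta>F * v$3) (at t)"
    by (intro DERIV_add DERIV_cmult deriv_comp d)
  moreover have "v$1 + \<beta>E / \<delta>F * v$3 \<le> 0"
  proof -
    have "z t $ 1 \<ge> 0" "z t $ 3 \<ge> 0" using m by (auto simp: MM_iff Dprime_def)
    then have "(\<beta>E / K) * z t $ 1 * z t $ 3 \<ge> 0" using pos by simp
    then show ?thesis using W_deriv_bound[OF m v] by linarith
  qed
  ultimately show "\<exists>d. ((\<lambda>s. z s $ 1 + \<beta>E / \<delta>F * z s $ 3) has_real_derivative d) (at t) \<and> d \<le> 0" by blast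
qed

end



lemma plip_id: "plip (\<lambda>s. s) S t"
  by (rule plip_deriv[OF DERIV_ident])

context model begin

lemma E_combo:
  assumes fs: "filippov_solution X Dprime I z" and z0: "0 \<in> I" "z 0 \<in> MM"
    and pq: "p \<in> I" "q \<in> I" "0 \<le> p" "p \<le> q" and e: "e > 0" "z q $ 1 \<ge> e"
  shows "z q $ 1 + K / e * (z q $ 1 + \<beta>E / \<delta>F * z q $ 3) + a * e * q
       \<le> z p $ 1 + K / e * (z p $ 1 + \<beta>E / \<delta>F * z p $ 3) + a * e * p"
proof (rule along_MM[OF fs z0 pq, where \<phi> = "\<lambda>s. z s $ 1 + K / e * (z s $ 1 + \<beta>E / \<delta>F * z s $ 3) + a * e * s"])
  show "plip (\<lambda>s. z s $ 1 + K / e * (z s $ 1 + \<beta>E / \<delta>F * z s $ 3) + a * e * s) {p..q} t" if "t \<in> {p..q}" for t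
    by (intro plip_add plip_cmult plip_id plipc[OF fs pq(1,2) that])
  fix t v assume t: "t \<in> {p<..<q}" and m: "z t \<in> MM" and d: "(z has_vector_derivative v) (at t)"
    and v: "v$1 = g1 (z t)" "v$3 \<le> \<Phi> (z t)"
  have "((\<lambda>s. z s $ 1 + K / e * (z s $ 1 + \<beta>E / \<delta>F * z s $ 3) + a * e * s) has_real_derivative
      v$1 + K / e * (v$1 + \<beta>E / \<delta>F * v$3) + a * e * 1) (at t)"
    by (intro DERIV_add DERIV_cmult deriv_comp d DERIV_ident)
  moreover have "v$1 + K / e * (v$1 + \<beta>E / \<delta>F * v$3) + a * e * 1 \<le> 0"
  proof -
    note ff = fs_facts[OF fs]
    have tI: "t \<in> I" using interval_sub[OF ff(1) pq(1,2)] t by auto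
    have Et: "z t $ 1 \<ge> e" using E_mono[OF fs z0 tI pq(2)] t pq(3) e(2) by auto
    have nn: "z t $ 1 \<ge> 0" "z t $ 3 \<ge> 0" using m by (auto simp: MM_iff Dprime_def)
    have W: "v$1 + \<beta>E / \<delta>F * v$3 \<le> - (\<beta>E / K) * z t $ 1 * z t $ 3" by (rule W_deriv_bound[OF m v])
    have "K / e * (v$1 + \<beta>E / \<delta>F * v$3) \<le> K / e * (- (\<beta>E / K) * z t $ 1 * z t $ 3)"
      using W e pos by (intro mult_left_mono) auto
    also have "\<dots> = - \<beta>E * z t $ 3 * (z t $ 1 / e)" using pos(7) e by (simp add: field_simps)
    also have "\<dots> \<le> - \<beta>E * z t $ 3 * 1"
    proof -
      have "z t $ 1 / e \<ge> 1" using Et e by simp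
      then have "\<beta>E * z t $ 3 * 1 \<le> \<beta>E * z t $ 3 * (z t $ 1 / e)" using pos nn by (intro mult_left_mono) auto
      then show ?thesis by simp
    qed
    finally have A: "K / e * (v$1 + \<beta>E / \<delta>F * v$3) \<le> - \<beta>E * z t $ 3" by simp
    have "v$1 = \<beta>E * z t $ 3 - (\<beta>E / K) * z t $ 1 * z t $ 3 - a * z t $ 1"
      using v(1) pos(7) by (simp add: g1_def field_simps)
    moreover have "(\<beta>E / K) * z t $ 1 * z t $ 3 \<ge> 0" using pos nn by simp
    moreover have "a * e \<le> a * z t $ 1" using Et a_pos by simp
    ultimately show ?thesis using A by linarith
  qed
  ultimately show "\<exists>d. ((\<lambda>s. z s $ 1 + K / e * (z s $ 1 + \<beta>E / \<delta>F * z s $ 3) + a * e * s) has_real_derivative d) (at t) \<and> d \<le> 0"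
    by blast
qed

lemma M_combo:
  assumes fs: "filippov_solution X Dprime I z" and z0: "0 \<in> I" "z 0 \<in> MM"
    and pq: "p \<in> I" "q \<in> I" "0 \<le> p" "p \<le> q" and m: "m > 0" "z q $ 2 \<ge> m"
    and Ep: "c0 * z p $ 1 \<le> \<delta>M * m / 2"
  shows "z q $ 2 + \<delta>M * m / 2 * q \<le> z p $ 2 + \<delta>M * m / 2 * p"
proof (rule along_MM[OF fs z0 pq, where \<phi> = "\<lambda>s. z s $ 2 + \<delta>M * m / 2 * s"])
  show "plip (\<lambda>s. z s $ 2 + \<delta>M * m / 2 * s) {p..q} t" if "t \<in> {p..q}" for t
    by (intro plip_add plip_cmult plip_id plipc[OF fs pq(1,2) that])
  fix t v assume t: "t \<in> {p<..<q}" and mm: "z t \<in> MM" and d: "(z has_vector_derivative v) (at t)"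
    and v: "v$2 = g3 (z t)"
  have "((\<lambda>s. z s $ 2 + \<delta>M * m / 2 * s) has_real_derivative v$2 + \<delta>M * m / 2 * 1) (at t)"
    by (intro DERIV_add DERIV_cmult deriv_comp d DERIV_ident)
  moreover have "v$2 + \<delta>M * m / 2 * 1 \<le> 0"
  proof -
    note ff = fs_facts[OF fs]
    have tI: "t \<in> I" using interval_sub[OF ff(1) pq(1,2)] t by auto
    have Mt: "z t $ 2 \<ge> m" using M_mono[OF fs z0 tI pq(2)] t pq(3) m(2) by auto
    have Et: "z t $ 1 \<le> z p $ 1" using E_mono[OF fs z0 pq(1) tI] t pq(3) by auto
    have "c0 * z t $ 1 \<le> c0 * z p $ 1" using Et c0_pos by simp
    moreover have "\<delta>M * m \<le> \<delta>M * z t $ 2" using Mt pos(4) by simp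
    ultimately show ?thesis using v Ep by (simp add: g3_def)
  qed
  ultimately show "\<exists>d. ((\<lambda>s. z s $ 2 + \<delta>M * m / 2 * s) has_real_derivative d) (at t) \<and> d \<le> 0"
    by blast
qed

lemma Ms_exp:
  assumes fs: "filippov_solution X Dprime I z" and z0: "0 \<in> I" "z 0 \<in> MM"
    and pq: "p \<in> I" "q \<in> I" "0 \<le> p" "p \<le> q" and mM: "z p $ 2 \<le> mM"
  shows "exp (\<delta>s * q) * (z q $ 4 - lam * mM / \<delta>s) \<le> exp (\<delta>s * p) * (z p $ 4 - lam * mM / \<delta>s)"
proof (rule along_MM[OF fs z0 pq, where \<phi> = "\<lambda>s. exp (\<delta>s * s) * (z s $ 4 - lam * mM / \<delta>s)"])
  show "plip (\<lambda>s. exp (\<delta>s * s) * (z s $ 4 - lam * mM / \<delta>s)) {p..q} t" if "t \<in> {p..q}" for t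
  proof (rule plip_mult)
    show "plip (\<lambda>s. exp (\<delta>s * s)) {p..q} t"
      by (rule plip_deriv) (auto intro!: derivative_eq_intros)
    show "plip (\<lambda>s. z s $ 4 - lam * mM / \<delta>s) {p..q} t"
      by (intro plip_diff plip_const plipc[OF fs pq(1,2) that])
  qed
  fix t v assume t: "t \<in> {p<..<q}" and mm: "z t \<in> MM" and d: "(z has_vector_derivative v) (at t)"
    and v: "v$4 = lam * z t $ 2 - \<delta>s * z t $ 4"
  have e: "((\<lambda>s. exp (\<delta>s * s)) has_real_derivative exp (\<delta>s * t) * \<delta>s) (at t)"
    using DERIV_chain2[OF DERIV_exp DERIV_cmult[OF DERIV_ident, of \<delta>s t]] by (simp add: mult.commute)
  have c: "((\<lambda>s. z s $ 4 - lam * mM / \<delta>s) has_real_derivative v$4 - 0) (at t)"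
    by (intro DERIV_diff deriv_comp d DERIV_const)
  have "((\<lambda>s. exp (\<delta>s * s) * (z s $ 4 - lam * mM / \<delta>s)) has_real_derivative
      exp (\<delta>s * t) * \<delta>s * (z t $ 4 - lam * mM / \<delta>s) + (v$4 - 0) * exp (\<delta>s * t)) (at t)"
    by (rule DERIV_mult[OF e c])
  moreover have "exp (\<delta>s * t) * \<delta>s * (z t $ 4 - lam * mM / \<delta>s) + (v$4 - 0) * exp (\<delta>s * t) \<le> 0"
  proof -
    note ff = fs_facts[OF fs]
    have tI: "t \<in> I" using interval_sub[OF ff(1) pq(1,2)] t by auto
    have Mt: "z t $ 2 \<le> mM" using M_mono[OF fs z0 pq(1) tI] t pq(3) mM by auto
    have "exp (\<delta>s * t) * \<delta>s * (z t $ 4 - lam * mM / \<delta>s) + (v$4 - 0) * exp (\<delta>s * t)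
        = exp (\<delta>s * t) * (lam * (z t $ 2 - mM))"
      using pos(6) by (simp add: v field_simps)
    also have "\<dots> \<le> 0" using Mt lam_pos by (simp add: mult_nonneg_nonpos)
    finally show ?thesis .
  qed
  ultimately show "\<exists>d. ((\<lambda>s. exp (\<delta>s * s) * (z s $ 4 - lam * mM / \<delta>s)) has_real_derivative d) (at t) \<and> d \<le> 0"
    by blast
qed

end



context model begin

lemma nonneg_comp:
  assumes fs: "filippov_solution X Dprime I z" and "t \<in> I"
  shows "z t $ 1 \<ge> 0" "z t $ 2 \<ge> 0" "z t $ 3 \<ge> 0" "z t $ 4 \<ge> 0"
  using fs_facts(3)[OF fs assms(2)] by (auto simp: Dprime_def)

lemma E_small:
  assumes fs: "filippov_solution X Dprime {0..} z" and z0: "z 0 \<in> MM" and e: "e > 0"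
  shows "\<exists>T\<ge>0. \<forall>t\<ge>T. z t $ 1 < e"
proof -
  have "\<exists>T\<ge>0. z T $ 1 < e"
  proof (rule ccontr)
    assume "\<not> ?thesis"
    then have all: "\<And>T. T \<ge> 0 \<Longrightarrow> z T $ 1 \<ge> e" by force
    define R where "R = z 0 $ 1 + K / e * (z 0 $ 1 + \<beta>E / \<delta>F * z 0 $ 3)"
    define T where "T = R / (a * e) + 1"
    have R0: "R \<ge> 0" using nonneg_comp[OF fs, of 0] e pos by (simp add: R_def)
    have T0: "T \<ge> 0" using R0 a_pos e by (simp add: T_def)
    have "z T $ 1 + K / e * (z T $ 1 + \<beta>E / \<delta>F * z T $ 3) + a * e * T \<le> R + a * e * 0"
      unfolding R_def by (rule E_combo[OF fs _ z0 _ _ order_refl T0 e all[OF T0]]) (use T0 in auto)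
    moreover have "z T $ 1 + K / e * (z T $ 1 + \<beta>E / \<delta>F * z T $ 3) \<ge> 0"
      using nonneg_comp[OF fs, of T] T0 e pos by simp
    moreover have "a * e * T = R + a * e" using a_pos e by (simp add: T_def field_simps)
    moreover have "a * e > 0" using a_pos e by simp
    ultimately show False by linarith
  qed
  then obtain T where T: "T \<ge> 0" "z T $ 1 < e" by blast
  have "z t $ 1 < e" if "t \<ge> T" for t
    using E_mono[OF fs _ z0, of T t] T that by force
  then show ?thesis using T(1) by blast
qed

lemma M_small:
  assumes fs: "filippov_solution X Dprime {0..} z" and z0: "z 0 \<in> MM" and m: "m > 0"
  shows "\<exists>T\<ge>0. \<forall>t\<ge>T. z t $ 2 < m"
proof -
  obtain T1 where T1: "T1 \<ge> 0" "\<And>t. t \<ge> T1 \<Longrightarrow> z t $ 1 < \<delta>M * m / (2 * c0)"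
    using E_small[OF fs z0, of "\<delta>M * m / (2 * c0)"] m pos c0_pos by auto
  have Ep: "c0 * z T1 $ 1 \<le> \<delta>M * m / 2"
    using T1(2)[of T1] c0_pos by (simp add: field_simps)
  have "\<exists>T\<ge>T1. z T $ 2 < m"
  proof (rule ccontr)
    assume "\<not> ?thesis"
    then have all: "\<And>T. T \<ge> T1 \<Longrightarrow> z T $ 2 \<ge> m" by force
    define T where "T = T1 + 2 * z T1 $ 2 / (\<delta>M * m) + 1"
    have "2 * z T1 $ 2 / (\<delta>M * m) \<ge> 0" using nonneg_comp[OF fs, of T1] T1 pos m by simp
    then have TT: "T \<ge> T1" by (simp add: T_def)
    have "z T $ 2 + \<delta>M * m / 2 * T \<le> z T1 $ 2 + \<delta>M * m / 2 * T1"
      by (rule M_combo[OF fs _ z0 _ _ T1(1) TT m all[OF TT] Ep]) (use TT T1 in auto)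
    moreover have "z T $ 2 \<ge> 0" using nonneg_comp[OF fs, of T] TT T1 by simp
    moreover have "\<delta>M * m / 2 * T = \<delta>M * m / 2 * T1 + z T1 $ 2 + \<delta>M * m / 2"
      using pos m by (simp add: T_def field_simps)
    moreover have "\<delta>M * m / 2 > 0" using pos m by simp
    ultimately show False by linarith
  qed
  then obtain T where T: "T \<ge> T1" "z T $ 2 < m" by blast
  have "z t $ 2 < m" if "t \<ge> T" for t
    using M_mono[OF fs _ z0, of T t] T T1 that by force
  then show ?thesis using T(1) T1(1) by (intro exI[of _ T]) auto
qed

lemma F_small:
  assumes fs: "filippov_solution X Dprime {0..} z" and z0: "z 0 \<in> MM" and e: "e > 0"
  shows "\<exists>T\<ge>0. \<forall>t\<ge>T. z t $ 3 < e"
proof -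
  obtain T where T: "T \<ge> 0" "\<And>t. t \<ge> T \<Longrightarrow> z t $ 1 < min (K / 2) (e * \<beta>E / (2 * a))"
    using E_small[OF fs z0, of "min (K / 2) (e * \<beta>E / (2 * a))"] e pos a_pos by auto
  have "z t $ 3 < e" if t: "t \<ge> T" for t
  proof -
    have m: "z t \<in> MM" using invariance[OF fs _ z0, of t] t T by auto
    have E1: "z t $ 1 < K / 2" and E2: "z t $ 1 < e * \<beta>E / (2 * a)" using T(2)[OF t] by auto
    have nn: "z t $ 1 \<ge> 0" "z t $ 3 \<ge> 0" using nonneg_comp[OF fs, of t] t T by auto
    have g: "\<beta>E * z t $ 3 * (1 - z t $ 1 / K) \<le> a * z t $ 1" using m by (simp add: MM_iff g1_def)
    have "1 - z t $ 1 / K \<ge> 1 / 2" using E1 pos(7) by (simp add: field_simps)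
    then have "\<beta>E * z t $ 3 * (1 / 2) \<le> \<beta>E * z t $ 3 * (1 - z t $ 1 / K)"
      using nn pos by (intro mult_left_mono) auto
    also have "\<dots> \<le> a * z t $ 1" by (rule g)
    also have "\<dots> < a * (e * \<beta>E / (2 * a))" using E2 a_pos by (rule mult_strict_left_mono)
    also have "\<dots> = \<beta>E * e * (1/2)" using a_pos by simp
    finally have "\<beta>E * z t $ 3 < \<beta>E * e" by simp
    then show ?thesis using pos by simp
  qed
  then show ?thesis using T(1) by blast
qed

lemma Ms_small:
  assumes fs: "filippov_solution X Dprime {0..} z" and z0: "z 0 \<in> MM" and m: "m > 0"
  shows "\<exists>T\<ge>0. \<forall>t\<ge>T. z t $ 4 < m"
proof -
  define mM where "mM = m * \<delta>s / (2 * lam)"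
  have mM: "mM > 0" using m pos lam_pos by (simp add: mM_def)
  have c: "lam * mM / \<delta>s = m / 2" using lam_pos pos by (simp add: mM_def field_simps)
  obtain T1 where T1: "T1 \<ge> 0" "\<And>t. t \<ge> T1 \<Longrightarrow> z t $ 2 < mM"
    using M_small[OF fs z0 mM] by auto
  define Q where "Q = z T1 $ 4"
  have Q: "Q \<ge> 0" using nonneg_comp[OF fs, of T1] T1 by (simp add: Q_def)
  define T where "T = T1 + 2 * Q / (m * \<delta>s) + 1"
  have "2 * Q / (m * \<delta>s) \<ge> 0" using Q m pos by simp
  then have TT: "T \<ge> T1" by (simp add: T_def)
  have "z t $ 4 < m" if t: "t \<ge> T" for t
  proof (rule ccontr)
    assume "\<not> z t $ 4 < m"
    then have big: "z t $ 4 - m / 2 \<ge> m / 2" by simp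
    have "exp (\<delta>s * t) * (z t $ 4 - lam * mM / \<delta>s) \<le> exp (\<delta>s * T1) * (z T1 $ 4 - lam * mM / \<delta>s)"
      by (rule Ms_exp[OF fs _ z0]) (use T1 TT t less_imp_le[OF T1(2)[of T1]] in auto)
    then have A: "exp (\<delta>s * t) * (z t $ 4 - m / 2) \<le> exp (\<delta>s * T1) * (Q - m / 2)"
      unfolding c Q_def .
    have "exp (\<delta>s * t) * (m / 2) \<le> exp (\<delta>s * t) * (z t $ 4 - m / 2)"
      using big by (intro mult_left_mono) auto
    also have "\<dots> \<le> exp (\<delta>s * T1) * Q"
    proof -
      have "exp (\<delta>s * T1) * (Q - m / 2) \<le> exp (\<delta>s * T1) * Q" using m by (intro mult_left_mono) auto
      then show ?thesis using A by linarith
    qed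
    finally have B: "exp (\<delta>s * t) * (m / 2) \<le> exp (\<delta>s * T1) * Q" .
    have "exp (\<delta>s * t) = exp (\<delta>s * (t - T1)) * exp (\<delta>s * T1)"
      by (simp add: exp_add[symmetric] algebra_simps)
    then have "exp (\<delta>s * (t - T1)) * exp (\<delta>s * T1) * (m / 2) \<le> exp (\<delta>s * T1) * Q" using B by simp
    then have C: "exp (\<delta>s * (t - T1)) * (m / 2) \<le> Q" by (simp add: algebra_simps)
    have D1: "exp (\<delta>s * (t - T1)) \<ge> 1 + \<delta>s * (t - T1)" by (rule exp_ge_add_one_self)
    have D2: "\<delta>s * (t - T1) \<ge> \<delta>s * (2 * Q / (m * \<delta>s) + 1)"
      using t pos by (intro mult_left_mono) (auto simp: T_def)
    have D3: "\<delta>s * (2 * Q / (m * \<delta>s) + 1) = 2 * Q / m + \<delta>s" using pos m by (simp add: field_simps)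
    have "1 + 2 * Q / m + \<delta>s \<le> exp (\<delta>s * (t - T1))" using D1 D2 D3 by linarith
    then have "(1 + 2 * Q / m + \<delta>s) * (m / 2) \<le> exp (\<delta>s * (t - T1)) * (m / 2)"
      using m by (intro mult_right_mono) auto
    moreover have "(1 + 2 * Q / m + \<delta>s) * (m / 2) = m / 2 + Q + \<delta>s * m / 2" using m by (simp add: field_simps)
    moreover have "\<delta>s * m / 2 > 0" using m pos by simp
    ultimately show False using C m by linarith
  qed
  then show ?thesis using TT T1(1) by (intro exI[of _ T]) auto
qed

end



lemma tendsto0_I:
  fixes f :: "real \<Rightarrow> real"
  assumes "\<And>e. e > 0 \<Longrightarrow> \<exists>T\<ge>0. \<forall>t\<ge>T. f t < e" and "\<And>t. t \<ge> 0 \<Longrightarrow> f t \<ge> 0"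
  shows "(f \<longlongrightarrow> 0) at_top"
  unfolding tendsto_iff
proof (intro allI impI)
  fix e :: real assume e: "e > 0"
  obtain T where T: "T \<ge> 0" "\<And>t. t \<ge> T \<Longrightarrow> f t < e" using assms(1)[OF e] by blast
  have "\<forall>t\<ge>T. dist (f t) 0 < e" using T assms(2) by (auto simp: dist_real_def)
  then show "\<forall>\<^sub>F x in at_top. dist (f x) 0 < e" unfolding eventually_at_top_linorder by blast
qed

context model begin

lemma pos_inv: "positively_invariant X Dprime MM"
  unfolding positively_invariant_def using invariance by blast

lemma norm_le_sum:
  assumes "w \<in> Dprime" shows "norm w \<le> w$1 + w$2 + w$3 + w$4"
proof -
  have "norm w \<le> (\<Sum>i\<in>UNIV. \<bar>w$i\<bar>)" by (rule norm_le_l1_cart)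
  also have "\<dots> = \<bar>w$1\<bar> + \<bar>w$2\<bar> + \<bar>w$3\<bar> + \<bar>w$4\<bar>" by (simp add: sum_4)
  also have "\<dots> = w$1 + w$2 + w$3 + w$4" using assms by (simp add: Dprime_def)
  finally show ?thesis .
qed

lemma conv:
  assumes fs: "filippov_solution X Dprime {0..} z" and z0: "z 0 \<in> MM"
  shows "(z \<longlongrightarrow> 0) at_top"
proof (rule Lim_null_comparison)
  have c1: "((\<lambda>t. z t $ 1) \<longlongrightarrow> 0) at_top"
    by (rule tendsto0_I[OF E_small[OF fs z0]]) (use nonneg_comp[OF fs] in auto)
  have c2: "((\<lambda>t. z t $ 2) \<longlongrightarrow> 0) at_top"
    by (rule tendsto0_I[OF M_small[OF fs z0]]) (use nonneg_comp[OF fs] in auto)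
  have c3: "((\<lambda>t. z t $ 3) \<longlongrightarrow> 0) at_top"
    by (rule tendsto0_I[OF F_small[OF fs z0]]) (use nonneg_comp[OF fs] in auto)
  have c4: "((\<lambda>t. z t $ 4) \<longlongrightarrow> 0) at_top"
    by (rule tendsto0_I[OF Ms_small[OF fs z0]]) (use nonneg_comp[OF fs] in auto)
  show "((\<lambda>t. z t $ 1 + z t $ 2 + z t $ 3 + z t $ 4) \<longlongrightarrow> 0) at_top"
    using tendsto_add[OF tendsto_add[OF tendsto_add[OF c1 c2] c3] c4] by simp
  have "\<forall>t\<ge>0. norm (z t) \<le> z t $ 1 + z t $ 2 + z t $ 3 + z t $ 4"
    using norm_le_sum fs_facts(3)[OF fs] by auto
  then show "\<forall>\<^sub>F t in at_top. norm (z t) \<le> z t $ 1 + z t $ 2 + z t $ 3 + z t $ 4"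
    unfolding eventually_at_top_linorder by blast
qed

lemma stab:
  assumes e: "\<epsilon> > 0"
  shows "\<exists>\<delta>>0. \<forall>I z. filippov_solution X Dprime I z \<and> 0 \<in> I \<and> z 0 \<in> MM \<and> norm (z 0) < \<delta> \<longrightarrow>
        (\<forall>t\<in>I. t > 0 \<longrightarrow> norm (z t) < \<epsilon>)"
proof -
  define C where "C = 4 + \<delta>F / \<beta>E + lam / \<delta>s"
  have C: "C > 0" using pos lam_pos by (simp add: C_def add_pos_nonneg)
  show ?thesis
  proof (intro exI[of _ "\<epsilon> / C"] conjI allI impI ballI)
    show "\<epsilon> / C > 0" using e C by simp
    fix I z t
    assume h: "filippov_solution X Dprime I z \<and> 0 \<in> I \<and> z 0 \<in> MM \<and> norm (z 0) < \<epsilon> / C"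
      and t: "t \<in> I" "t > 0"
    then have fs: "filippov_solution X Dprime I z" and z0: "0 \<in> I" "z 0 \<in> MM" and n: "norm (z 0) < \<epsilon> / C"
      by auto
    define n0 where "n0 = norm (z 0)"
    have c0n: "z 0 $ i \<le> n0" for i using component_le_norm_cart[of "z 0" i] by (simp add: n0_def)
    have nn0: "z 0 $ 1 \<ge> 0" "z 0 $ 2 \<ge> 0" "z 0 $ 3 \<ge> 0" "z 0 $ 4 \<ge> 0" using nonneg_comp[OF fs z0(1)] by auto
    have nnt: "z t $ 1 \<ge> 0" "z t $ 2 \<ge> 0" "z t $ 3 \<ge> 0" "z t $ 4 \<ge> 0" using nonneg_comp[OF fs t(1)] by auto
    have t0: "0 \<le> t" using t by simp
    have b1: "z t $ 1 \<le> n0" using E_mono[OF fs z0 z0(1) t(1) order_refl t0] c0n[of 1] by linarith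
    have b2: "z t $ 2 \<le> n0" using M_mono[OF fs z0 z0(1) t(1) order_refl t0] c0n[of 2] by linarith
    have b3: "z t $ 3 \<le> (\<delta>F / \<beta>E + 1) * n0"
    proof -
      have W: "z t $ 1 + \<beta>E / \<delta>F * z t $ 3 \<le> z 0 $ 1 + \<beta>E / \<delta>F * z 0 $ 3"
        by (rule W_mono[OF fs z0 z0(1) t(1) order_refl t0])
      then have "\<beta>E / \<delta>F * z t $ 3 \<le> z 0 $ 1 + \<beta>E / \<delta>F * z 0 $ 3" using nnt by linarith
      then have "\<delta>F / \<beta>E * (\<beta>E / \<delta>F * z t $ 3) \<le> \<delta>F / \<beta>E * (z 0 $ 1 + \<beta>E / \<delta>F * z 0 $ 3)"
        using pos by (intro mult_left_mono) auto
      moreover have eq1: "\<delta>F / \<beta>E * (\<beta>E / \<delta>F * x) = x" for x using pos by simp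
      ultimately have "z t $ 3 \<le> \<delta>F / \<beta>E * z 0 $ 1 + z 0 $ 3" by (simp add: distrib_left)
      moreover have "\<delta>F / \<beta>E * z 0 $ 1 \<le> \<delta>F / \<beta>E * n0" using c0n[of 1] pos by (intro mult_left_mono) auto
      ultimately show ?thesis using c0n[of 3] by (simp add: algebra_simps)
    qed
    have b4: "z t $ 4 \<le> (lam / \<delta>s + 1) * n0"
    proof -
      define c where "c = lam * z 0 $ 2 / \<delta>s"
      have c: "c \<ge> 0" using nn0 lam_pos pos by (simp add: c_def)
      have A: "exp (\<delta>s * t) * (z t $ 4 - c) \<le> exp (\<delta>s * 0) * (z 0 $ 4 - c)"
        unfolding c_def by (rule Ms_exp[OF fs z0 z0(1) t(1) order_refl t0 order_refl])
      have "z t $ 4 - c \<le> z 0 $ 4"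
      proof (cases "z t $ 4 - c \<le> 0")
        case True then show ?thesis using nn0 by linarith
      next
        case False
        have "exp (\<delta>s * t) \<ge> 1" using pos t0 by simp
        then have "1 * (z t $ 4 - c) \<le> exp (\<delta>s * t) * (z t $ 4 - c)" using False by (intro mult_right_mono) auto
        then show ?thesis using A c by simp
      qed
      moreover have "c \<le> lam / \<delta>s * n0" using c0n[of 2] lam_pos pos
        by (simp add: c_def divide_right_mono mult_left_mono)
      ultimately show ?thesis using c0n[of 4] by (simp add: algebra_simps)
    qed
    have "norm (z t) \<le> z t $ 1 + z t $ 2 + z t $ 3 + z t $ 4"
      using norm_le_sum fs_facts(3)[OF fs t(1)] by auto
    also have "\<dots> \<le> n0 + n0 + (\<delta>F / \<beta>E + 1) * n0 + (lam / \<delta>s + 1) * n0"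
      using b1 b2 b3 b4 by linarith
    also have "\<dots> = C * n0" by (simp add: C_def algebra_simps)
    also have "\<dots> < C * (\<epsilon> / C)" using n C unfolding n0_def by (rule mult_strict_left_mono)
    also have "\<dots> = \<epsilon>" using C by simp
    finally show "norm (z t) < \<epsilon>" .
  qed
qed

lemma GAS: "GAS_in X Dprime MM"
  unfolding GAS_in_def using stab conv by blast

end


theorem theorem7:
  fixes \<beta>E \<nu>E \<delta>E \<delta>M \<delta>F \<delta>s K \<nu> \<gamma>s lam :: real
  assumes "\<beta>E > 0" "\<nu>E > 0" "\<delta>E > 0" "\<delta>M > 0" "\<delta>F > 0" "\<delta>s > 0" "K > 0"
    and "0 < \<nu>" "\<nu> < 1" and "0 < \<gamma>s" "\<gamma>s \<le> 1" and "\<delta>s \<ge> \<delta>M"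
    and R0: "\<beta>E * \<nu> * \<nu>E / (\<delta>F * (\<nu>E + \<delta>E)) > 1"
    and lam: "lam > ((\<beta>E * \<nu> * \<nu>E - (\<nu>E + \<delta>E) * \<delta>F) * \<delta>s) / (\<gamma>s * (\<nu>E + \<delta>E) * \<delta>F)"
  defines "\<kappa>bar \<equiv> \<gamma>s * \<delta>F * (\<nu>E + \<delta>E) / (\<beta>E * \<nu> * \<nu>E - \<delta>F * (\<nu>E + \<delta>E))"
  defines "X \<equiv> closed_loop \<beta>E \<nu>E \<delta>E \<delta>M \<delta>F \<delta>s K \<nu> \<gamma>s lam"
  defines "MM \<equiv> Mset \<beta>E \<nu>E \<delta>E \<delta>M K \<nu> \<kappa>bar"
  shows "positively_invariant X Dprime MM \<and> GAS_in X Dprime MM"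
proof -
  have d0: "\<delta>F * (\<nu>E + \<delta>E) > 0" using assms by simp
  have R0': "\<beta>E * \<nu> * \<nu>E > \<delta>F * (\<nu>E + \<delta>E)"
    using R0 d0 by (simp add: less_divide_eq)
  have d1: "\<gamma>s * (\<nu>E + \<delta>E) * \<delta>F > 0" using assms by simp
  have "(\<beta>E * \<nu> * \<nu>E - (\<nu>E + \<delta>E) * \<delta>F) * \<delta>s < lam * (\<gamma>s * (\<nu>E + \<delta>E) * \<delta>F)"
    using lam d1 by (simp add: divide_less_eq)
  then have lam': "lam * (\<gamma>s * \<delta>F * (\<nu>E + \<delta>E)) > \<delta>s * (\<beta>E * \<nu> * \<nu>E - \<delta>F * (\<nu>E + \<delta>E))"
    by (simp add: algebra_simps)
  interpret m: model \<beta>E \<nu>E \<delta>E \<delta>M \<delta>F \<delta>s K \<nu> \<gamma>s lam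
    by unfold_locales (use assms R0' lam' in auto)
  have X: "X = m.X" by (simp add: X_def m.X_def)
  have M: "MM = m.MM" by (simp add: MM_def m.MM_def \<kappa>bar_def m.\<kappa>_def m.Dd_def m.a_def)
  show ?thesis unfolding X M using m.pos_inv m.GAS by blast
qed

end
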